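(* In $Y_R(\mathfrak{so}_3)$: $$[e_{-1,0}(u),e_{-1,0}(v)]=\frac12\,\frac{\big(e_{-1,0}(u)-e_{-1,0}(v)\big)^2}{u-v},\qquad [f_{0,-1}(u),f_{0,-1}(v)]=-\frac12\,\frac{\big(f_{0,-1}(u)-f_{0,-1}(v)\big)^2}{u-v}.$$
   Context: Let $e_{ij}$ ($i,j\in\{-1,0,1\}$) be the matrix units of $\mathrm{End}\,\mathbb{C}^3$, with rows and columns indexed by $-1,0,1$. Let $P=\sum_{i,j}e_{ij}\otimes e_{ji}$, $Q=\sum_{i,j}e_{ij}\otimes e_{-i,-j}$ and $R(u)=1-\frac{P}{u}+\frac{Q}{u-\frac12}$. Let $t$ be the transposition on $\mathrm{End}\,\mathbb{C}^3$ given by $(e_{ij})^t=e_{-j,-i}$. The algebra $Y_R(\mathfrak{so}_3)$ is the unital associative algebra over $\mathbb{C}$ generated by elements $t_{ij}^{(r)}$, $r\ge 1$, $i,j\in\{-1,0,1\}$; put $t_{ij}(u)=\delta_{ij}+\sum_{r\ge1}t^{(r)}_{ij}u^{-r}$, $T(u)=\sum_{i,j}t_{ij}(u)\otimes e_{ij}$, $T^t(u)=\sum_{i,j}t_{ij}(u)\otimes e_{-j,-i}$, $T_1(u)=\sum t_{ij}(u)\otimes e_{ij}\otimes 1$, $T_2(v)=\sum t_{ij}(v)\otimes 1\otimes e_{ij}$. The defining relations are $R(u-v)T_1(u)T_2(v)=T_2(v)T_1(u)R(u-v)$ and $T(u)T^t(u+\frac12)=T^t(u+\frac12)T(u)=1$.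 The Gauss generators are the unique series $k_i(u)\in 1+u^{-1}Y_R(\mathfrak{so}_3)[[u^{-1}]]$ ($i=-1,0,1$) and $e_{ij}(u),f_{ji}(u)\in u^{-1}Y_R(\mathfrak{so}_3)[[u^{-1}]]$ ($-1\le i<j\le1$) such that $T(u)=F(u)K(u)E(u)$, where $F(u)$ is the lower unitriangular matrix with below-diagonal entries $F_{0,-1}=f_{0,-1}(u)$, $F_{1,-1}=f_{1,-1}(u)$, $F_{1,0}=f_{1,0}(u)$, $K(u)=\mathrm{diag}(k_{-1}(u),k_0(u),k_1(u))$, and $E(u)$ is the upper unitriangular matrix with above-diagonal entries $E_{-1,0}=e_{-1,0}(u)$, $E_{-1,1}=e_{-1,1}(u)$, $E_{0,1}=e_{01}(u)$ (rows/columns indexed by $-1,0,1$). *)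

theory Defs
  imports Complex_Main "HOL-Library.Function_Algebras"
begin

text \<open>A complex algebra: a unital ring with a central unital ring homomorphism from the complex numbers.\<close>
definition calg :: "(complex \<Rightarrow> 'a::ring_1) \<Rightarrow> bool" where
  "calg \<phi> \<longleftrightarrow> \<phi> 1 = 1 \<and> (\<forall>x y. \<phi> (x + y) = \<phi> x + \<phi> y)
     \<and> (\<forall>x y. \<phi> (x * y) = \<phi> x * \<phi> y) \<and> (\<forall>c a. \<phi> c * a = a * \<phi> c)"

definition idx :: "int set" where "idx = {-1, 0, 1}"

text \<open>One-variable formal series in u^-1: n maps to the coefficient of u^-n.\<close>
definition ser1_one :: "nat \<Rightarrow> 'a::{zero,one}" where
  "ser1_one n = (if n = 0 then 1 else 0)"

definition cmul1 :: "(nat \<Rightarrow> 'a::{comm_monoid_add,times}) \<Rightarrow> (nat \<Rightarrow> 'a) \<Rightarrow> nat \<Rightarrow> 'a" where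
  "cmul1 a b n = (\<Sum>p\<le>n. a p * b (n - p))"

text \<open>Substitution u to u+1/2: (u+1/2)^-r = sum over k of (-r choose k) (1/2)^k u^(-r-k).\<close>
definition shift_half :: "(complex \<Rightarrow> 'a::ring_1) \<Rightarrow> (nat \<Rightarrow> 'a) \<Rightarrow> nat \<Rightarrow> 'a" where
  "shift_half \<phi> c n = (\<Sum>r\<le>n. \<phi> (((- of_nat r) gchoose (n - r)) * (1/2) ^ (n - r)) * c r)"

text \<open>Two-variable series: A m n is the coefficient of u^-m v^-n (m, n integers).\<close>
definition ser_u :: "(nat \<Rightarrow> 'a::zero) \<Rightarrow> int \<Rightarrow> int \<Rightarrow> 'a" where
  "ser_u a = (\<lambda>m n. if 0 \<le> m \<and> n = 0 then a (nat m) else 0)"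

definition ser_v :: "(nat \<Rightarrow> 'a::zero) \<Rightarrow> int \<Rightarrow> int \<Rightarrow> 'a" where
  "ser_v a = (\<lambda>m n. if m = 0 \<and> 0 \<le> n then a (nat n) else 0)"

text \<open>Product of series supported in nonnegative exponents of u^-1, v^-1.\<close>
definition cmul2 :: "(int \<Rightarrow> int \<Rightarrow> 'a::{comm_monoid_add,times}) \<Rightarrow> (int \<Rightarrow> int \<Rightarrow> 'a) \<Rightarrow> int \<Rightarrow> int \<Rightarrow> 'a" where
  "cmul2 A B = (\<lambda>m n. \<Sum>p\<in>{0..m}. \<Sum>q\<in>{0..n}. A p q * B (m - p) (n - q))"

text \<open>Multiplication by (u - v).\<close>
definition mul_umv :: "(int \<Rightarrow> int \<Rightarrow> 'a::ab_group_add) \<Rightarrow> int \<Rightarrow> int \<Rightarrow> 'a" where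
  "mul_umv A = (\<lambda>m n. A (m + 1) n - A m (n + 1))"

definition scal2 :: "(complex \<Rightarrow> 'a::ring_1) \<Rightarrow> complex \<Rightarrow> (int \<Rightarrow> int \<Rightarrow> 'a) \<Rightarrow> int \<Rightarrow> int \<Rightarrow> 'a" where
  "scal2 \<phi> c A = (\<lambda>m n. \<phi> c * A m n)"

text \<open>Multiplication by (u - v - 1/2).\<close>
definition mul_umvh :: "(complex \<Rightarrow> 'a::ring_1) \<Rightarrow> (int \<Rightarrow> int \<Rightarrow> 'a) \<Rightarrow> int \<Rightarrow> int \<Rightarrow> 'a" where
  "mul_umvh \<phi> A = mul_umv A - scal2 \<phi> (1/2) A"

text \<open>RTT relation, multiplied by (u-v)(u-v-1/2), entry ((i,k),(j,l)).\<close>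
definition rtt_rel :: "(complex \<Rightarrow> 'a::ring_1) \<Rightarrow> (int \<Rightarrow> int \<Rightarrow> nat \<Rightarrow> 'a) \<Rightarrow> bool" where
  "rtt_rel \<phi> t \<longleftrightarrow> (\<forall>i\<in>idx. \<forall>j\<in>idx. \<forall>k\<in>idx. \<forall>l\<in>idx.
     mul_umv (mul_umvh \<phi> (cmul2 (ser_u (t i j)) (ser_v (t k l))))
       - mul_umvh \<phi> (cmul2 (ser_u (t k j)) (ser_v (t i l)))
       + (if k = - i then mul_umv (\<Sum>a\<in>idx. cmul2 (ser_u (t a j)) (ser_v (t (- a) l))) else 0)
     = mul_umv (mul_umvh \<phi> (cmul2 (ser_v (t k l)) (ser_u (t i j))))
       - mul_umvh \<phi> (cmul2 (ser_v (t k j)) (ser_u (t i l)))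
       + (if l = - j then mul_umv (\<Sum>a\<in>idx. cmul2 (ser_v (t k (- a))) (ser_u (t i a))) else 0))"

text \<open>T(u) T^t(u+1/2) = T^t(u+1/2) T(u) = 1, with (T^t)_ab = t_{-b,-a}.\<close>
definition unitary_rel :: "(complex \<Rightarrow> 'a::ring_1) \<Rightarrow> (int \<Rightarrow> int \<Rightarrow> nat \<Rightarrow> 'a) \<Rightarrow> bool" where
  "unitary_rel \<phi> t \<longleftrightarrow> (\<forall>i\<in>idx. \<forall>j\<in>idx.
     (\<Sum>a\<in>idx. cmul1 (t i a) (shift_half \<phi> (t (- j) (- a)))) = (if i = j then ser1_one else 0)
   \<and> (\<Sum>a\<in>idx. cmul1 (shift_half \<phi> (t (- a) (- i))) (t a j)) = (if i = j then ser1_one else 0))"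

text \<open>t i j r is the image of t_ij^(r) (r \<ge> 1); t i j 0 is the constant term delta_ij.\<close>
definition yangian_so3 :: "(complex \<Rightarrow> 'a::ring_1) \<Rightarrow> (int \<Rightarrow> int \<Rightarrow> nat \<Rightarrow> 'a) \<Rightarrow> bool" where
  "yangian_so3 \<phi> t \<longleftrightarrow> (\<forall>i\<in>idx. \<forall>j\<in>idx. t i j 0 = (if i = j then 1 else 0))
     \<and> rtt_rel \<phi> t \<and> unitary_rel \<phi> t"

definition Fmat :: "(int \<Rightarrow> int \<Rightarrow> nat \<Rightarrow> 'a::{zero,one}) \<Rightarrow> int \<Rightarrow> int \<Rightarrow> nat \<Rightarrow> 'a" where
  "Fmat f i a = (if a = i then ser1_one else if a < i then f i a else (\<lambda>_. 0))"

definition Emat :: "(int \<Rightarrow> int \<Rightarrow> nat \<Rightarrow> 'a::{zero,one}) \<Rightarrow> int \<Rightarrow> int \<Rightarrow> nat \<Rightarrow> 'a" where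
  "Emat e a j = (if a = j then ser1_one else if a < j then e a j else (\<lambda>_. 0))"

definition gauss_decomp :: "(int \<Rightarrow> int \<Rightarrow> nat \<Rightarrow> 'a::ring_1) \<Rightarrow> (int \<Rightarrow> int \<Rightarrow> nat \<Rightarrow> 'a)
    \<Rightarrow> (int \<Rightarrow> nat \<Rightarrow> 'a) \<Rightarrow> (int \<Rightarrow> int \<Rightarrow> nat \<Rightarrow> 'a) \<Rightarrow> bool" where
  "gauss_decomp t f k e \<longleftrightarrow> (\<forall>a\<in>idx. k a 0 = 1)
     \<and> (\<forall>i\<in>idx. \<forall>j\<in>idx. i < j \<longrightarrow> e i j 0 = 0 \<and> f j i 0 = 0)
     \<and> (\<forall>i\<in>idx. \<forall>j\<in>idx. t i j = (\<Sum>a\<in>idx. cmul1 (cmul1 (Fmat f i a) (k a)) (Emat e a j)))"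

end

theory Submission
  imports Defs "HOL-Computational_Algebra.Formal_Power_Series"
begin

unbundle fps_syntax

lemma calg_facts:
  assumes "calg \<phi>"
  shows "\<phi> 1 = 1" "\<phi> (x + y) = \<phi> x + \<phi> y" "\<phi> (x * y) = \<phi> x * \<phi> y" "\<phi> c * a = a * \<phi> c"
    "\<phi> 0 = 0" "\<phi> (- x) = - \<phi> x" "\<phi> (x - y) = \<phi> x - \<phi> y"
proof -
  show h1: "\<phi> 1 = 1" "\<phi> (x + y) = \<phi> x + \<phi> y" "\<phi> (x * y) = \<phi> x * \<phi> y" "\<phi> c * a = a * \<phi> c"
    using assms unfolding calg_def by blast+
  have add: "\<And>x y. \<phi> (x + y) = \<phi> x + \<phi> y" using assms unfolding calg_def by blast
  have "\<phi> 0 = \<phi> (0 + 0)" by simp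
  also have "\<dots> = \<phi> 0 + \<phi> 0" by (rule add)
  finally show z: "\<phi> 0 = 0" by simp
  have n: "\<phi> (- w) = - \<phi> w" for w
  proof -
    have "\<phi> (- w) + \<phi> w = 0" using add[of "-w" w] z by (simp del: add)
    then show ?thesis by (simp add: eq_neg_iff_add_eq_0)
  qed
  show "\<phi> (- x) = - \<phi> x" by (rule n)
  show "\<phi> (x - y) = \<phi> x - \<phi> y" using add[of x "-y"] n by (simp del: add)
qed

lemmas calg_simps = calg_facts(1,2,3,5,6,7)
lemma calg_comm: "calg \<phi> \<Longrightarrow> \<phi> c * a = a * \<phi> c" by (rule calg_facts(4))

lemma calg_sum: "calg \<phi> \<Longrightarrow> \<phi> (sum f S) = (\<Sum>i\<in>S. \<phi> (f i))"
  by (induction S rule: infinite_finite_induct) (auto simp: calg_simps)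

lemma fps_central:
  fixes f g :: "'b::ring_1 fps"
  assumes "\<And>i a. f $ i * a = a * f $ i"
  shows "f * g = g * f"
proof (rule fps_ext)
  fix n
  have "(f * g) $ n = (\<Sum>i=0..n. f$i * g$(n - i))" by (rule fps_mult_nth)
  also have "\<dots> = (\<Sum>i=0..n. g$(n - i) * f$i)" by (rule sum.cong) (simp_all add: assms)
  also have "\<dots> = (\<Sum>i=0..n. g$(n - (n + 0 - i)) * f$(n + 0 - i))"
    by (rule sum.atLeastAtMost_rev)
  also have "\<dots> = (\<Sum>i=0..n. g$i * f$(n - i))"
    by (rule sum.cong) auto
  also have "\<dots> = (g * f) $ n" by (simp add: fps_mult_nth)
  finally show "(f * g) $ n = (g * f) $ n" .
qed

definition U :: "(nat \<Rightarrow> 'b::ring_1) \<Rightarrow> 'b fps fps" where "U a = fps_const (Abs_fps a)"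
definition V :: "(nat \<Rightarrow> 'b::ring_1) \<Rightarrow> 'b fps fps" where "V a = Abs_fps (\<lambda>n. fps_const (a n))"
definition iota :: "(complex \<Rightarrow> 'b::ring_1) \<Rightarrow> complex fps fps \<Rightarrow> 'b fps fps" where
  "iota \<phi> F = Abs_fps (\<lambda>n. Abs_fps (\<lambda>m. \<phi> (F $ n $ m)))"

lemma iota_nth: "iota \<phi> F $ n $ m = \<phi> (F $ n $ m)" by (simp add: iota_def)

lemma iota_add: "calg \<phi> \<Longrightarrow> iota \<phi> (F + G) = iota \<phi> F + iota \<phi> G"
  by (rule fps_ext, rule fps_ext) (simp add: iota_nth calg_simps)
lemma iota_diff: "calg \<phi> \<Longrightarrow> iota \<phi> (F - G) = iota \<phi> F - iota \<phi> G"
  by (rule fps_ext, rule fps_ext) (simp add: iota_nth calg_simps)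
lemma iota_neg: "calg \<phi> \<Longrightarrow> iota \<phi> (- F) = - iota \<phi> F"
  by (rule fps_ext, rule fps_ext) (simp add: iota_nth calg_simps)
lemma iota_one: "calg \<phi> \<Longrightarrow> iota \<phi> 1 = 1"
  by (rule fps_ext, rule fps_ext) (simp add: iota_nth calg_simps fps_one_nth)
lemma iota_zero: "calg \<phi> \<Longrightarrow> iota \<phi> 0 = 0"
  by (rule fps_ext, rule fps_ext) (simp add: iota_nth calg_simps)
lemma iota_mult: "calg \<phi> \<Longrightarrow> iota \<phi> (F * G) = iota \<phi> F * iota \<phi> G"
  by (rule fps_ext, rule fps_ext) (simp add: iota_nth calg_simps fps_mult_nth fps_sum_nth calg_sum)

lemma iota_central: 
  assumes "calg \<phi>" shows "iota \<phi> F * A = A * iota \<phi> F"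
proof (rule fps_central)
  fix i a
  show "iota \<phi> F $ i * a = a * iota \<phi> F $ i"
    by (rule fps_central) (simp add: iota_nth calg_comm[OF assms])
qed

lemma U_nth: "U a $ n $ m = (if n = 0 then a m else 0)" by (simp add: U_def)
lemma V_nth: "V a $ n $ m = (if m = 0 then a n else 0)" by (simp add: V_def)

lemma U_add: "U (a + b) = U a + U b" by (rule fps_ext, rule fps_ext) (simp add: U_nth)
lemma U_diff: "U (a - b) = U a - U b" by (rule fps_ext, rule fps_ext) (simp add: U_nth)
lemma V_add: "V (a + b) = V a + V b" by (rule fps_ext, rule fps_ext) (simp add: V_nth)
lemma V_diff: "V (a - b) = V a - V b" by (rule fps_ext, rule fps_ext) (simp add: V_nth)
lemma U_zero: "U 0 = 0" by (rule fps_ext, rule fps_ext) (simp add: U_nth)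
lemma V_zero: "V 0 = 0" by (rule fps_ext, rule fps_ext) (simp add: V_nth)
lemma U_one: "U ser1_one = 1" by (rule fps_ext, rule fps_ext) (simp add: U_nth ser1_one_def fps_one_nth)
lemma V_one: "V ser1_one = 1" by (rule fps_ext, rule fps_ext) (simp add: V_nth ser1_one_def fps_one_nth)
lemma fps_const_sum: "fps_const (sum f S) = (\<Sum>i\<in>S. fps_const (f i))"
  by (induction S rule: infinite_finite_induct) (simp_all del: fps_const_add add: fps_const_add[symmetric])
lemma U_mult: "U (cmul1 a b) = U a * U b"
proof -
  have "Abs_fps (cmul1 a b) = Abs_fps a * Abs_fps b"
    by (rule fps_ext) (simp add: cmul1_def fps_mult_nth atLeast0AtMost)
  then show ?thesis by (simp add: U_def)
qed
lemma V_mult: "V (cmul1 a b) = V a * V b"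
proof (rule fps_ext)
  fix n
  have "(V a * V b) $ n = (\<Sum>i=0..n. fps_const (a i * b (n - i)))"
    by (simp add: fps_mult_nth V_def)
  also have "\<dots> = fps_const (cmul1 a b n)"
    by (simp add: cmul1_def fps_const_sum atLeast0AtMost)
  finally show "V (cmul1 a b) $ n = (V a * V b) $ n" by (simp add: V_def)
qed

definition Psi :: "int \<Rightarrow> (int \<Rightarrow> int \<Rightarrow> 'b::ring_1) \<Rightarrow> 'b fps fps" where
  "Psi s A = Abs_fps (\<lambda>n. Abs_fps (\<lambda>m. A (int m - s) (int n - s)))"
definition supp :: "int \<Rightarrow> (int \<Rightarrow> int \<Rightarrow> 'b::zero) \<Rightarrow> bool" where
  "supp s A \<longleftrightarrow> (\<forall>m n. m < -s \<or> n < -s \<longrightarrow> A m n = 0)"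

lemma Psi_nth: "Psi s A $ n $ m = A (int m - s) (int n - s)" by (simp add: Psi_def)
lemma Psi_add: "Psi s (A + B) = Psi s A + Psi s B" by (rule fps_ext, rule fps_ext) (simp add: Psi_nth)
lemma Psi_diff: "Psi s (A - B) = Psi s A - Psi s B" by (rule fps_ext, rule fps_ext) (simp add: Psi_nth)
lemma Psi_zero: "Psi s 0 = 0" by (rule fps_ext, rule fps_ext) (simp add: Psi_nth)
lemma Psi_sum: "Psi s (sum f S) = (\<Sum>i\<in>S. Psi s (f i))"
proof (induction S rule: infinite_finite_induct)
  case (infinite A) then show ?case by (metis Psi_zero sum.infinite)
next
  case empty then show ?case by (metis Psi_zero sum.empty)
next
  case (insert x F) then show ?case by (metis Psi_add sum.insert)
qed

lemma Psi_ser_u: "Psi 0 (ser_u a) = U a"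
  by (rule fps_ext, rule fps_ext) (simp add: Psi_nth U_nth ser_u_def)
lemma Psi_ser_v: "Psi 0 (ser_v a) = V a"
  by (rule fps_ext, rule fps_ext) (simp add: Psi_nth V_nth ser_v_def)

lemma int_interval_sum: "(\<Sum>p\<in>{0..int m}. f p) = (\<Sum>j=0..m. f (int j))"
proof -
  have "{0..int m} = int ` {0..m}"
    by (auto simp: image_iff intro!: bexI[of _ "nat _"])
  then show ?thesis by (simp add: sum.reindex)
qed

lemma Psi_cmul2: "Psi 0 (cmul2 A B) = Psi 0 A * Psi 0 B"
proof (rule fps_ext, rule fps_ext)
  fix n m
  have "Psi 0 (cmul2 A B) $ n $ m = (\<Sum>j=0..m. \<Sum>i=0..n. A (int j) (int i) * B (int m - int j) (int n - int i))"
    by (simp add: Psi_nth cmul2_def int_interval_sum)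
  also have "\<dots> = (\<Sum>i=0..n. \<Sum>j=0..m. A (int j) (int i) * B (int m - int j) (int n - int i))"
    by (rule sum.swap)
  also have "\<dots> = (Psi 0 A * Psi 0 B) $ n $ m"
    by (simp add: fps_mult_nth fps_sum_nth Psi_nth of_nat_diff)
  finally show "Psi 0 (cmul2 A B) $ n $ m = (Psi 0 A * Psi 0 B) $ n $ m" .
qed

lemma supp_cmul2: "supp 0 (cmul2 A B)" by (simp add: supp_def cmul2_def)
lemma supp_ser_u: "supp 0 (ser_u a)" by (simp add: supp_def ser_u_def)
lemma supp_ser_v: "supp 0 (ser_v a)" by (simp add: supp_def ser_v_def)
lemma supp_mono: "supp s A \<Longrightarrow> s \<le> t \<Longrightarrow> supp t A" by (simp add: supp_def)
lemma supp_mul_umv: "supp s A \<Longrightarrow> supp (s + 1) (mul_umv A)" by (simp add: supp_def mul_umv_def)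
lemma supp_scal2: "supp s A \<Longrightarrow> supp s (scal2 \<phi> c A)" by (simp add: supp_def scal2_def)
lemma supp_diff: "supp s A \<Longrightarrow> supp s B \<Longrightarrow> supp s (A - B :: int \<Rightarrow> int \<Rightarrow> 'b::ab_group_add)" by (simp add: supp_def)
lemma supp_add: "supp s A \<Longrightarrow> supp s B \<Longrightarrow> supp s (A + B :: int \<Rightarrow> int \<Rightarrow> 'b::ab_group_add)" by (simp add: supp_def)
lemma supp_zero: "supp s 0" by (simp add: supp_def)
lemma supp_sum: "(\<And>i. i \<in> S \<Longrightarrow> supp s (f i)) \<Longrightarrow> supp s (sum f S :: int \<Rightarrow> int \<Rightarrow> 'b::ab_group_add)"
  by (induction S rule: infinite_finite_induct) (auto intro!: supp_add supp_zero)

abbreviation xR :: "'b::ring_1 fps fps" where "xR \<equiv> fps_const fps_X"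
abbreviation yR :: "'b::ring_1 fps fps" where "yR \<equiv> fps_X"

lemma Psi_mul_umv:
  assumes "supp s A" shows "Psi (s + 1) (mul_umv A) = (yR - xR) * Psi s A"
proof (rule fps_ext, rule fps_ext)
  fix n m
  show "Psi (s + 1) (mul_umv A) $ n $ m = ((yR - xR) * Psi s A) $ n $ m"
    using assms by (auto simp: Psi_nth mul_umv_def algebra_simps supp_def of_nat_diff)
qed

lemma Psi_shift:
  assumes "supp s A" shows "Psi (s + 1) A = (xR * yR) * Psi s A"
proof (rule fps_ext, rule fps_ext)
  fix n m
  show "Psi (s + 1) A $ n $ m = ((xR * yR) * Psi s A) $ n $ m"
    using assms by (auto simp: Psi_nth mult.assoc algebra_simps supp_def of_nat_diff)
qed

lemma Psi_scal2: "Psi s (scal2 \<phi> c A) = fps_const (fps_const (\<phi> c)) * Psi s A"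
  by (rule fps_ext, rule fps_ext) (simp add: Psi_nth scal2_def)

lemma Psi_inj:
  assumes "supp s A" "supp s B" "Psi s A = Psi s B" shows "A = B"
proof (intro ext)
  fix m n
  show "A m n = B m n"
  proof (cases "m < -s \<or> n < -s")
    case True then show ?thesis using assms(1,2) by (auto simp: supp_def)
  next
    case False
    have "Psi s A $ nat (n + s) $ nat (m + s) = Psi s B $ nat (n + s) $ nat (m + s)" using assms(3) by simp
    then show ?thesis using False by (simp add: Psi_nth)
  qed
qed


definition prodw :: "'r::ring_1 list \<Rightarrow> nat list \<Rightarrow> 'r" where
  "prodw as w = prod_list (map ((!) as) w)"

definition evp :: "('c \<Rightarrow> 'r::ring_1) \<Rightarrow> 'r list \<Rightarrow> (nat list \<times> 'c) list \<Rightarrow> 'r" where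
  "evp \<iota> as p = sum_list (map (\<lambda>(w,c). prodw as w * \<iota> c) p)"

definition pneg :: "(nat list \<times> 'c::comm_ring_1) list \<Rightarrow> (nat list \<times> 'c) list" where
  "pneg p = map (\<lambda>(w,c). (w, - c)) p"

definition pm :: "(nat list \<times> 'c::comm_ring_1) list \<Rightarrow> (nat list \<times> 'c) list \<Rightarrow> (nat list \<times> 'c) list" where
  "pm p q = concat (map (\<lambda>(w1,c1). map (\<lambda>(w2,c2). (w1 @ w2, c1 * c2)) q) p)"

definition csum :: "(nat list \<times> 'c::comm_ring_1) list \<Rightarrow> nat list \<Rightarrow> 'c" where
  "csum p w = sum_list (map snd (filter (\<lambda>x. fst x = w) p))"

fun swp :: "nat list \<Rightarrow> nat list" where
  "swp (a # b # w) = (if a = 1 \<and> b = 0 then 0 # swp (1 # w) else a # swp (b # w))"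
| "swp w = w"

lemma pneg_simps [simp]: "pneg [] = []" "pneg ((w,c) # p) = (w, -c) # pneg p"
  by (simp_all add: pneg_def)
lemma pm_simps [simp]: "pm [] q = []" "pm ((w,c) # p) q = map (\<lambda>(w2,c2). (w @ w2, c * c2)) q @ pm p q"
  by (simp_all add: pm_def)
lemma csum_simps [simp]: "csum [] w = 0" "csum ((v,c) # p) w = (if v = w then c else 0) + csum p w"
  by (simp_all add: csum_def)

locale cent =
  fixes \<iota> :: "'c::comm_ring_1 \<Rightarrow> 'r::ring_1"
  assumes i_add: "\<iota> (a + b) = \<iota> a + \<iota> b"
    and i_mult: "\<iota> (a * b) = \<iota> a * \<iota> b"
    and i_one: "\<iota> 1 = 1"
    and i_comm: "\<iota> c * x = x * \<iota> c"
begin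

lemma i_zero: "\<iota> 0 = 0"
proof -
  have "\<iota> 0 = \<iota> 0 + \<iota> 0" using i_add[of 0 0] by simp
  then show ?thesis by simp
qed
lemma i_neg: "\<iota> (- a) = - \<iota> a"
  using i_add[of "-a" a] i_zero by (simp add: eq_neg_iff_add_eq_0)
lemma i_diff: "\<iota> (a - b) = \<iota> a - \<iota> b"
  using i_add[of a "-b"] i_neg[of b] by simp

lemma evp_Nil [simp]: "evp \<iota> as [] = 0" by (simp add: evp_def)
lemma evp_Cons: "evp \<iota> as ((w,c) # p) = prodw as w * \<iota> c + evp \<iota> as p" by (simp add: evp_def)
lemma evp_append: "evp \<iota> as (p @ q) = evp \<iota> as p + evp \<iota> as q" by (simp add: evp_def)
lemma evp_neg: "evp \<iota> as (pneg p) = - evp \<iota> as p"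
  by (induction p) (auto simp: evp_Cons i_neg)
lemma prodw_append: "prodw as (v @ w) = prodw as v * prodw as w" by (simp add: prodw_def)

lemma evp_map: "evp \<iota> as (map (\<lambda>(w2,c2). (w @ w2, c * c2)) q) = prodw as w * \<iota> c * evp \<iota> as q"
proof (induction q)
  case Nil then show ?case by simp
next
  case (Cons a q)
  obtain w2 c2 where a: "a = (w2, c2)" by (cases a)
  have "prodw as (w @ w2) * \<iota> (c * c2) = prodw as w * (prodw as w2 * \<iota> c) * \<iota> c2"
    by (simp only: prodw_append i_mult mult.assoc)
  also have "\<dots> = prodw as w * \<iota> c * (prodw as w2 * \<iota> c2)"
    by (simp only: i_comm[of c "prodw as w2", symmetric] mult.assoc)
  finally have "prodw as (w @ w2) * \<iota> (c * c2) = prodw as w * \<iota> c * (prodw as w2 * \<iota> c2)" .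
  then show ?case using Cons by (simp add: a evp_Cons distrib_left)
qed

lemma evp_mul: "evp \<iota> as (pm p q) = evp \<iota> as p * evp \<iota> as q"
proof (induction p)
  case Nil then show ?case by simp
next
  case (Cons a p)
  obtain w c where a: "a = (w, c)" by (cases a)
  show ?case using Cons by (simp add: a evp_append evp_map evp_Cons distrib_right mult.assoc)
qed

lemma evp_atom: "i < length as \<Longrightarrow> as ! i = evp \<iota> as [([i], 1)]"
  by (simp add: evp_def prodw_def i_one)
lemma evp_cst: "\<iota> c = evp \<iota> as [([], c)]"
  by (simp add: evp_def prodw_def)

lemma evp_plus_merge: "evp \<iota> as p + evp \<iota> as q = evp \<iota> as (p @ q)" by (simp add: evp_append)
lemma evp_mult_merge: "evp \<iota> as p * evp \<iota> as q = evp \<iota> as (pm p q)" by (simp add: evp_mul)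
lemma evp_neg_merge: "- evp \<iota> as p = evp \<iota> as (pneg p)" by (simp add: evp_neg)
lemma evp_diff_merge: "evp \<iota> as p - evp \<iota> as q = evp \<iota> as (p @ pneg q)" by (simp add: evp_append evp_neg)

lemmas reify_merge = evp_plus_merge evp_mult_merge evp_neg_merge evp_diff_merge

lemma evp_grouped: "evp \<iota> as p = (\<Sum>w\<in>set (map fst p). prodw as w * \<iota> (csum p w))"
proof (induction p)
  case Nil then show ?case by simp
next
  case (Cons a p)
  obtain v c where a: "a = (v, c)" by (cases a)
  let ?S = "set (map fst p)"
  have fin: "finite ?S" by simp
  show ?case
  proof (cases "v \<in> ?S")
    case True
    have "(\<Sum>w\<in>insert v ?S. prodw as w * \<iota> (csum ((v,c) # p) w))
        = (\<Sum>w\<in>?S. prodw as w * \<iota> ((if v = w then c else 0) + csum p w))"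
      using True by (simp add: insert_absorb)
    also have "\<dots> = (\<Sum>w\<in>?S. (if v = w then prodw as w * \<iota> c else 0) + prodw as w * \<iota> (csum p w))"
      by (rule sum.cong) (auto simp: i_add i_zero distrib_left)
    also have "\<dots> = prodw as v * \<iota> c + evp \<iota> as p"
      using True Cons by (simp add: sum.distrib sum.delta[OF fin])
    finally show ?thesis by (simp add: a evp_Cons)
  next
    case False
    have cs: "csum p v = 0"
    proof -
      have "filter (\<lambda>x. fst x = v) p = []" using False by (auto simp: filter_empty_conv)
      then show ?thesis by (simp add: csum_def)
    qed
    have "(\<Sum>w\<in>insert v ?S. prodw as w * \<iota> (csum ((v,c) # p) w))
        = prodw as v * \<iota> c + (\<Sum>w\<in>?S. prodw as w * \<iota> (csum p w))"
      using False cs by (simp add: sum.insert[OF fin False])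
        (rule sum.cong, auto)
    then show ?thesis using Cons by (simp add: a evp_Cons)
  qed
qed

lemma evp_zero: "(\<forall>w\<in>set (map fst p). csum p w = 0) \<Longrightarrow> evp \<iota> as p = 0"
  unfolding evp_grouped by (rule sum.neutral) (simp add: i_zero)

lemma prodw_swp:
  assumes "as ! 1 * as ! 0 = as ! 0 * as ! 1"
  shows "prodw as (swp w) = prodw as w"
proof (induction w rule: swp.induct)
  case (1 a b w)
  show ?case
  proof (cases "a = 1 \<and> b = 0")
    case True
    then have "prodw as (swp (a # b # w)) = as ! 0 * prodw as (1 # w)"
      using 1 by (simp add: prodw_def)
    also have "\<dots> = as ! 0 * (as ! 1 * prodw as w)" by (simp add: prodw_def)
    also have "\<dots> = as ! 1 * (as ! 0 * prodw as w)"
      by (simp only: mult.assoc[symmetric] assms)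
    finally show ?thesis using True by (simp add: prodw_def)
  next
    case False
    then have "swp (a # b # w) = a # swp (b # w)" by simp
    then show ?thesis using 1(2) False by (simp add: prodw_def)
  qed
qed (simp_all add: prodw_def)

lemma evp_swp:
  assumes "as ! 1 * as ! 0 = as ! 0 * as ! 1"
  shows "evp \<iota> as p = evp \<iota> as (map (\<lambda>(w,c). (swp w, c)) p)"
  by (induction p) (auto simp: evp_Cons prodw_swp[OF assms])

end


abbreviation Xc :: "complex fps fps" where "Xc \<equiv> fps_const fps_X"
abbreviation Yc :: "complex fps fps" where "Yc \<equiv> fps_X"
abbreviation Cc :: "complex \<Rightarrow> complex fps fps" where "Cc c \<equiv> fps_const (fps_const c)"

lemma cent_iota: "calg \<phi> \<Longrightarrow> cent (iota \<phi>)"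
  by unfold_locales (simp_all add: iota_add iota_mult iota_one, rule iota_central)

lemma iota_Yc: "calg \<phi> \<Longrightarrow> iota \<phi> Yc = yR"
  by (rule fps_ext, rule fps_ext) (simp add: iota_nth calg_simps fps_X_def fps_one_nth)
lemma iota_Xc: "calg \<phi> \<Longrightarrow> iota \<phi> Xc = xR"
  by (rule fps_ext, rule fps_ext) (simp add: iota_nth calg_simps fps_X_def)
lemma iota_Cc: "calg \<phi> \<Longrightarrow> iota \<phi> (Cc c) = fps_const (fps_const (\<phi> c))"
  by (rule fps_ext, rule fps_ext) (simp add: iota_nth calg_simps)

lemma test:
  fixes \<phi> :: "complex \<Rightarrow> 'b::ring_1"
  assumes "calg \<phi>"
  shows "iota \<phi> (Yc - Xc) * (U k * V e) - U k * (iota \<phi> Yc * V e) + U k * (V e * iota \<phi> Xc) = 0"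
proof -
  interpret cent "iota \<phi>" using assms by (rule cent_iota)
  define as where "as = [U k, V k, U e, V e, U g, V g]"
  have at: "U k = evp (iota \<phi>) as [([0],1)]" "V k = evp (iota \<phi>) as [([1],1)]"
     "U e = evp (iota \<phi>) as [([2],1)]" "V e = evp (iota \<phi>) as [([3],1)]"
     "U g = evp (iota \<phi>) as [([4],1)]" "V g = evp (iota \<phi>) as [([5],1)]"
    by (subst evp_atom[symmetric]; simp add: as_def)+
  show ?thesis
    apply (simp only: at evp_cst[where as=as] reify_merge)
    apply (rule evp_zero)
    apply (simp add: pm_def pneg_def)
    done
qed


lemma fps_X_cancel:
  fixes A :: "'a::ring_1 fps"
  assumes "fps_X * A = 0" shows "A = 0"
proof (rule fps_ext)
  fix n have "(fps_X * A) $ Suc n = 0" using assms by simp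
  then show "A $ n = 0 $ n" by simp
qed

lemma const1_cancel:
  fixes f A :: "'a::ring_1 fps"
  assumes f0: "f $ 0 = 1" and fa: "f * A = 0" shows "A = 0"
proof -
  have "A $ n = 0" for n
  proof (induction n rule: less_induct)
    case (less n)
    have "(f * A) $ n = (\<Sum>i=0..n. f$i * A$(n - i))" by (rule fps_mult_nth)
    also have "\<dots> = f$0 * A$n + (\<Sum>i=Suc 0..n. f$i * A$(n - i))"
      by (simp add: sum.atLeast_Suc_atMost)
    also have "(\<Sum>i=Suc 0..n. f$i * A$(n - i)) = 0"
      using less by (intro sum.neutral) auto
    finally show ?case using fa f0 by simp
  qed
  then show ?thesis by (intro fps_ext) simp
qed

lemma lin_cancel:
  fixes A :: "'a::ring_1 fps fps"
  assumes "(yR * fps_const \<alpha> - xR) * A = 0" shows "A = 0"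
proof -
  have c: "\<alpha> * (if n = 0 then 0 else A $ (n - 1)) - fps_X * A $ n = 0" for n
  proof -
    have "((yR * fps_const \<alpha> - xR) * A) $ n = 0" using assms by simp
    moreover have "((yR * fps_const \<alpha> - xR) * A) $ n = (yR * (fps_const \<alpha> * A)) $ n - fps_X * A $ n"
      by (simp add: left_diff_distrib mult.assoc)
    moreover have "(yR * (fps_const \<alpha> * A)) $ n = (if n = 0 then 0 else \<alpha> * A $ (n - 1))"
      by (cases n) (simp_all add: fps_mult_left_const_nth)
    ultimately show ?thesis by simp
  qed
  have "A $ n = 0" for n
  proof (induction n)
    case 0 then show ?case using c[of 0] fps_X_cancel by simp
  next
    case (Suc n) then show ?case using c[of "Suc n"] fps_X_cancel by simp
  qed
  then show ?thesis by (intro fps_ext) simp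
qed

lemma iota_lin:
  assumes "calg \<phi>"
  shows "iota \<phi> (Yc - Xc + Cc t * (Xc * Yc)) = yR * fps_const (1 + fps_const (\<phi> t) * fps_X) - xR"
proof -
  have "iota \<phi> (Yc - Xc + Cc t * (Xc * Yc)) = yR - xR + fps_const (fps_const (\<phi> t)) * (xR * yR)"
    using assms by (simp add: cent.i_add[OF cent_iota[OF assms]] cent.i_diff[OF cent_iota[OF assms]]
          cent.i_mult[OF cent_iota[OF assms]] iota_Xc iota_Yc iota_Cc)
  also have "\<dots> = yR * fps_const (1 + fps_const (\<phi> t) * fps_X) - xR"
    by (simp add: algebra_simps fps_const_mult[symmetric] fps_const_add[symmetric] mult.assoc
        fps_mult_fps_X_commute del: fps_const_mult fps_const_add)
  finally show ?thesis .
qed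

lemma lin_cancel_iota:
  assumes "calg \<phi>" "iota \<phi> (Yc - Xc + Cc t * (Xc * Yc)) * A = 0" shows "A = 0"
  using assms iota_lin[OF assms(1)] lin_cancel by metis


definition qq :: "'a::ring_1 fps" where "qq = Abs_fps (\<lambda>k. if k = 0 then 0 else 1)"

lemma qq_central: "qq * f = f * qq"
  by (rule fps_central) (simp add: qq_def)
lemma qq_pow_central: "qq ^ n * f = f * qq ^ n"
  by (induction n) (simp_all add: mult.assoc qq_central, metis mult.assoc qq_central)

lemma qq_pow_small: "i < n \<Longrightarrow> (qq ^ n) $ i = (0::'a::ring_1)"
proof (induction n arbitrary: i)
  case 0 then show ?case by simp
next
  case (Suc n)
  have "(qq ^ Suc n) $ i = (\<Sum>j=0..i. qq$j * (qq ^ n :: 'a fps)$(i - j))"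
    by (simp add: fps_mult_nth)
  also have "\<dots> = 0"
    using Suc by (intro sum.neutral) (auto simp: qq_def)
  finally show ?case .
qed

lemma mult_qq_pow_small: "i < n \<Longrightarrow> (f * qq ^ n) $ i = (0::'a::ring_1)"
  by (simp add: fps_mult_nth qq_pow_small)

definition sig :: "'a::ring_1 fps fps \<Rightarrow> 'a fps" where
  "sig F = Abs_fps (\<lambda>N. (\<Sum>n\<le>N. F$n * qq^n) $ N)"

lemma sig_trunc:
  assumes "N \<le> K" shows "sig F $ N = (\<Sum>n\<le>K. F$n * qq^n) $ N"
proof -
  have "{..K} = {..N} \<union> {N<..K}" using assms by auto
  then have "(\<Sum>n\<le>K. F$n * qq^n) = (\<Sum>n\<le>N. F$n * qq^n) + (\<Sum>n\<in>{N<..K}. F$n * qq^n)"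
    by (simp add: sum.union_disjoint ivl_disj_int)
  moreover have "(\<Sum>n\<in>{N<..K}. F$n * qq^n) $ N = 0"
    by (simp add: fps_sum_nth mult_qq_pow_small)
  ultimately show ?thesis by (simp add: sig_def)
qed

lemma sig_add: "sig (F + G) = sig F + sig G"
  by (rule fps_ext) (simp add: sig_def distrib_right sum.distrib)
lemma sig_diff: "sig (F - G) = sig F - sig G"
  by (rule fps_ext) (simp add: sig_def left_diff_distrib sum_subtractf)
lemma sig_const: "sig (fps_const c) = c"
proof (rule fps_ext)
  fix N
  have "(\<Sum>n\<le>N. fps_const c $ n * qq^n) = (\<Sum>n\<le>N. if n = 0 then c else 0)"
    by (rule sum.cong) auto
  then show "sig (fps_const c) $ N = c $ N" by (simp add: sig_def)
qed
lemma sig_one: "sig 1 = 1"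
  using sig_const[of 1] by simp
lemma sig_X: "sig fps_X = (qq :: 'a::ring_1 fps)"
proof (rule fps_ext)
  fix N
  show "sig fps_X $ N = qq $ N"
  proof (cases N)
    case 0 then show ?thesis by (simp add: sig_def qq_def)
  next
    case (Suc M)
    have "sig fps_X $ N = (\<Sum>n\<le>N. fps_X$n * qq^n) $ N" by (simp only: sig_def fps_nth_Abs_fps)
    also have "\<dots> = (\<Sum>n\<le>N. if n = 1 then qq else 0) $ N"
      by (rule arg_cong[where f="\<lambda>x. x $ N"], rule sum.cong) (auto simp: fps_X_def)
    also have "\<dots> = qq $ N" using Suc by simp
    finally show ?thesis .
  qed
qed

lemma sig_mult: "sig (F * G) = sig F * sig G"
proof (rule fps_ext)
  fix N
  define T where "T H = (\<Sum>n\<le>N. H$n * qq^n)" for H :: "'a fps fps"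
  define X where "X a b = F$a * G$b * qq^(a+b)" for a b
  have "(sig F * sig G) $ N = (\<Sum>i=0..N. sig F $ i * sig G $ (N - i))" by (rule fps_mult_nth)
  also have "\<dots> = (\<Sum>i=0..N. T F $ i * T G $ (N - i))"
    by (rule sum.cong) (simp_all add: sig_trunc[of _ N] T_def)
  also have "\<dots> = (T F * T G) $ N" by (simp add: fps_mult_nth)
  also have "T F * T G = (\<Sum>a\<le>N. \<Sum>b\<le>N. X a b)"
  proof -
    have "T F * T G = (\<Sum>a\<le>N. \<Sum>b\<le>N. F$a * qq^a * (G$b * qq^b))"
      by (simp add: T_def sum_product)
    also have "\<dots> = (\<Sum>a\<le>N. \<Sum>b\<le>N. X a b)"
    proof (intro sum.cong refl)
      fix a b
      have "F$a * qq^a * (G$b * qq^b) = F$a * (qq^a * G$b) * qq^b" by (simp only: mult.assoc)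
      also have "\<dots> = F$a * (G$b * qq^a) * qq^b" by (simp only: qq_pow_central)
      also have "\<dots> = X a b" by (simp only: X_def mult.assoc power_add)
      finally show "F$a * qq^a * (G$b * qq^b) = X a b" .
    qed
    finally show ?thesis .
  qed
  also have "(\<Sum>a\<le>N. \<Sum>b\<le>N. X a b) $ N = (\<Sum>a\<le>N. \<Sum>b\<le>N. X a b $ N)"
    by (simp add: fps_sum_nth)
  also have "\<dots> = (\<Sum>(a,b)\<in>{..N}\<times>{..N}. X a b $ N)"
    by (simp add: sum.cartesian_product)
  also have "\<dots> = (\<Sum>(a,b)\<in>{(a,b). a + b \<le> N}. X a b $ N)"
  proof (rule sum.mono_neutral_right)
    show "finite ({..N}\<times>{..N})" by simp
    show "{(a,b). a + b \<le> N} \<subseteq> {..N}\<times>{..N}" by auto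
    show "\<forall>i\<in>{..N} \<times> {..N} - {(a, b). a + b \<le> N}. (case i of (a, b) \<Rightarrow> X a b $ N) = 0"
    proof
      fix i assume i: "i \<in> {..N} \<times> {..N} - {(a,b). a + b \<le> N}"
      obtain a b where ab: "i = (a,b)" by (cases i)
      with i have "N < a + b" by auto
      then show "(case i of (a,b) \<Rightarrow> X a b $ N) = 0" using ab by (simp add: X_def mult_qq_pow_small)
    qed
  qed
  also have "\<dots> = (\<Sum>n\<le>N. \<Sum>i\<le>n. X i (n - i) $ N)"
    by (rule sum.triangle_reindex_eq)
  also have "\<dots> = (\<Sum>n\<le>N. (F * G) $ n * qq^n) $ N"
    by (simp add: fps_sum_nth fps_mult_nth X_def sum_distrib_right atLeast0AtMost)
  also have "\<dots> = sig (F * G) $ N" by (simp add: sig_def)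
  finally show "sig (F * G) $ N = (sig F * sig G) $ N" ..
qed

lemma sig_sum: "sig (sum f S) = (\<Sum>i\<in>S. sig (f i))"
  by (induction S rule: infinite_finite_induct) (simp_all add: sig_add sig_const[of 0, simplified])

lemma sig_U: "sig (U a) = Abs_fps a" by (simp add: U_def sig_const)
lemma sig_nth0: "sig F $ 0 = F $ 0 $ 0" by (simp add: sig_def)


definition iota1 :: "(complex \<Rightarrow> 'b::ring_1) \<Rightarrow> complex fps \<Rightarrow> 'b fps" where
  "iota1 \<phi> f = Abs_fps (\<lambda>m. \<phi> (f $ m))"

lemma iota1_nth: "iota1 \<phi> f $ m = \<phi> (f $ m)" by (simp add: iota1_def)
lemma iota1_add: "calg \<phi> \<Longrightarrow> iota1 \<phi> (F + G) = iota1 \<phi> F + iota1 \<phi> G"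
  by (rule fps_ext) (simp add: iota1_nth calg_simps)
lemma iota1_mult: "calg \<phi> \<Longrightarrow> iota1 \<phi> (F * G) = iota1 \<phi> F * iota1 \<phi> G"
  by (rule fps_ext) (simp add: iota1_nth calg_simps fps_mult_nth calg_sum)
lemma iota1_one: "calg \<phi> \<Longrightarrow> iota1 \<phi> 1 = 1"
  by (rule fps_ext) (simp add: iota1_nth calg_simps fps_one_nth)
lemma iota1_central: "calg \<phi> \<Longrightarrow> iota1 \<phi> F * A = A * iota1 \<phi> F"
  by (rule fps_central) (simp add: iota1_nth calg_comm)
lemma cent_iota1: "calg \<phi> \<Longrightarrow> cent (iota1 \<phi>)"
  by unfold_locales (simp_all add: iota1_add iota1_mult iota1_one, rule iota1_central)
lemma iota1_sum: "calg \<phi> \<Longrightarrow> iota1 \<phi> (sum f S) = (\<Sum>i\<in>S. iota1 \<phi> (f i))"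
  by (induction S rule: infinite_finite_induct)
    (simp_all add: iota1_add, (rule fps_ext, simp add: iota1_nth calg_simps)+)
lemma iota1_power: "calg \<phi> \<Longrightarrow> iota1 \<phi> (f ^ n) = iota1 \<phi> f ^ n"
  by (induction n) (simp_all add: iota1_one iota1_mult)
lemma iota1_qq: "calg \<phi> \<Longrightarrow> iota1 \<phi> qq = qq"
  by (rule fps_ext) (simp add: iota1_nth qq_def calg_simps)
lemma iota1_X: "calg \<phi> \<Longrightarrow> iota1 \<phi> fps_X = fps_X"
  by (rule fps_ext) (simp add: iota1_nth fps_X_def calg_simps)
lemma iota1_const: "calg \<phi> \<Longrightarrow> iota1 \<phi> (fps_const c) = fps_const (\<phi> c)"
  by (rule fps_ext) (simp add: iota1_nth calg_simps)

lemma iota_nth_row: "iota \<phi> F $ n = iota1 \<phi> (F $ n)"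
  by (rule fps_ext) (simp add: iota_nth iota1_nth)

lemma sig_iota:
  assumes "calg \<phi>" shows "sig (iota \<phi> F) = iota1 \<phi> (sig F)"
proof (rule fps_ext)
  fix N
  have "sig (iota \<phi> F) $ N = (\<Sum>n\<le>N. iota1 \<phi> (F$n * qq^n)) $ N"
    by (simp add: sig_def iota_nth_row iota1_mult[OF assms] iota1_power[OF assms] iota1_qq[OF assms])
  also have "\<dots> = iota1 \<phi> (\<Sum>n\<le>N. F$n * qq^n) $ N"
    by (simp add: iota1_sum[OF assms])
  also have "\<dots> = iota1 \<phi> (sig F) $ N" by (simp add: iota1_nth sig_def)
  finally show "sig (iota \<phi> F) $ N = iota1 \<phi> (sig F) $ N" .
qed


abbreviation "Dc \<equiv> Yc - Xc"
abbreviation "Zc \<equiv> Xc * Yc"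
abbreviation "hc \<equiv> Cc (1/2)"
abbreviation "Pc \<equiv> Dc - hc * Zc"
abbreviation "Mc \<equiv> Dc - Zc"
abbreviation "Ppc \<equiv> Dc + hc * Zc"
abbreviation "Mpc \<equiv> Dc + Zc"

lemma hc2: "2 * hc = 1"
  by (rule fps_ext, rule fps_ext) (simp add: numeral_fps_const)

lemma Cc_m1: "Cc (-1) = -1" by (simp only: fps_const_neg[symmetric] fps_const_1_eq_1)
lemma Cc_1: "Cc 1 = 1" by simp
lemma Cc_mh: "Cc (- (1/2)) = - hc" by (simp only: fps_const_neg[symmetric])

lemma cancel_gen: "calg \<phi> \<Longrightarrow> Yc - Xc + Cc t * (Xc * Yc) = c \<Longrightarrow> iota \<phi> c * A = 0 \<Longrightarrow> A = 0"
  using lin_cancel_iota by blast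
lemma cancel_M: "calg \<phi> \<Longrightarrow> iota \<phi> Mc * A = 0 \<Longrightarrow> A = 0"
  by (erule cancel_gen[where t="-1"]) (simp_all add: Cc_m1)
lemma cancel_Mp: "calg \<phi> \<Longrightarrow> iota \<phi> Mpc * A = 0 \<Longrightarrow> A = 0"
  by (erule cancel_gen[where t="1"]) (simp_all add: Cc_1)
lemma cancel_P: assumes "calg \<phi>" "iota \<phi> Pc * A = 0" shows "A = 0"
proof -
  have "Yc - Xc + Cc (- (1/2)) * (Xc * Yc) = Pc"
    unfolding Cc_mh by (simp only: minus_mult_left[symmetric] diff_conv_add_uminus)
  then show ?thesis using cancel_gen assms by blast
qed
lemma cancel_Pp: "calg \<phi> \<Longrightarrow> iota \<phi> Ppc * A = 0 \<Longrightarrow> A = 0"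
  by (erule cancel_gen[where t="1/2"]) simp_all
lemma cancel_D: "calg \<phi> \<Longrightarrow> iota \<phi> Dc * A = 0 \<Longrightarrow> A = 0"
  by (erule cancel_gen[where t="0"]) simp_all

definition Dk :: "complex fps fps" where "Dk = Yc - Xc"
definition Zk :: "complex fps fps" where "Zk = Xc * Yc"
abbreviation "Mk \<equiv> Dk - Zk"
abbreviation "Mpk \<equiv> Dk + Zk"
abbreviation "P2k \<equiv> 2 * Dk - Zk"
abbreviation "Pp2k \<equiv> 2 * Dk + Zk"

lemma cancel_Mk: "calg \<phi> \<Longrightarrow> iota \<phi> Mk * A = 0 \<Longrightarrow> A = 0"
  by (erule cancel_gen[where t="-1"]) (simp_all add: Cc_m1 Dk_def Zk_def)
lemma cancel_Mpk: "calg \<phi> \<Longrightarrow> iota \<phi> Mpk * A = 0 \<Longrightarrow> A = 0"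
  by (erule cancel_gen[where t="1"]) (simp_all add: Cc_1 Dk_def Zk_def)
lemma cancel_Dk: "calg \<phi> \<Longrightarrow> iota \<phi> Dk * A = 0 \<Longrightarrow> A = 0"
  by (erule cancel_gen[where t="0"]) (simp_all add: Dk_def)

lemma cancel_two: assumes "calg \<phi>" "iota \<phi> (2 * c) * A = 0" shows "iota \<phi> c * A = 0"
proof -
  interpret cent "iota \<phi>" using assms(1) by (rule cent_iota)
  have "iota \<phi> hc * (iota \<phi> (2 * c) * A) = 0" using assms(2) by simp
  moreover have "hc * 2 = 1" using hc2 by (simp only: mult.commute)
  ultimately show ?thesis by (simp only: i_mult[symmetric] mult.assoc[symmetric] mult_1_left i_one)
qed

lemma two_half1: fixes d z h :: "'a::comm_ring_1" assumes "2 * h = 1" shows "2 * (d + (- h) * z) = 2 * d - z"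
proof -
  have "2 * (d + (- h) * z) = 2 * d - (2 * h) * z" by (simp add: algebra_simps)
  then show ?thesis using assms by simp
qed
lemma two_half2: fixes d z h :: "'a::comm_ring_1" assumes "2 * h = 1" shows "2 * (d + h * z) = 2 * d + z"
proof -
  have "2 * (d + h * z) = 2 * d + (2 * h) * z" by (simp add: algebra_simps)
  then show ?thesis using assms by simp
qed

lemma cancel_P2k: assumes "calg \<phi>" "iota \<phi> P2k * A = 0" shows "A = 0"
proof -
  have eq: "P2k = 2 * (Yc - Xc + Cc (- (1/2)) * (Xc * Yc))"
    unfolding Cc_mh Dk_def Zk_def two_half1[OF hc2] ..
  have "iota \<phi> (2 * (Yc - Xc + Cc (- (1/2)) * (Xc * Yc))) * A = 0" using assms(2) by (simp only: eq)
  then have "iota \<phi> (Yc - Xc + Cc (- (1/2)) * (Xc * Yc)) * A = 0"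
    by (rule cancel_two[OF assms(1)])
  then show ?thesis using lin_cancel_iota assms(1) by blast
qed
lemma cancel_Pp2k: assumes "calg \<phi>" "iota \<phi> Pp2k * A = 0" shows "A = 0"
proof -
  have eq: "Pp2k = 2 * (Yc - Xc + Cc (1/2) * (Xc * Yc))"
    unfolding Dk_def Zk_def two_half2[OF hc2] ..
  have "iota \<phi> (2 * (Yc - Xc + Cc (1/2) * (Xc * Yc))) * A = 0" using assms(2) by (simp only: eq)
  then have "iota \<phi> (Yc - Xc + Cc (1/2) * (Xc * Yc)) * A = 0"
    by (rule cancel_two[OF assms(1)])
  then show ?thesis using lin_cancel_iota assms(1) by blast
qed


lemma fps_const_cancel:
  fixes f :: "'a::ring_1 fps" and A :: "'a fps fps"
  assumes "f $ 0 = 1" "fps_const f * A = 0" shows "A = 0"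
proof (rule fps_ext)
  fix n
  have "f * A $ n = 0" using assms(2) by (metis fps_mult_left_const_nth fps_zero_nth)
  then show "A $ n = 0 $ n" using const1_cancel[OF assms(1)] by simp
qed

lemma core_R2:
  fixes \<phi> :: "complex \<Rightarrow> 'b::ring_1" and ku kv eu ev gu gv :: "'b fps fps"
  assumes calg: "calg \<phi>"
    and cku: "\<And>A. ku * A = 0 \<Longrightarrow> A = 0" and ckv: "\<And>A. kv * A = 0 \<Longrightarrow> A = 0"
    and h11: "(iota \<phi> (Dk*P2k) * (ku * kv) - iota \<phi> (Zk*P2k) * (ku * kv) - (iota \<phi> (Dk*P2k) * (kv * ku) - iota \<phi> (Zk*P2k) * (kv * ku))) = 0"
    and h10: "(iota \<phi> (Dk*P2k) * (ku * (kv * ev)) - iota \<phi> (Zk*P2k) * (ku * (kv * ev)) - (iota \<phi> (Dk*P2k) * ((kv * ev) * ku) - iota \<phi> (Zk*P2k) * (kv * (ku * eu)))) = 0"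
    and h01: "(iota \<phi> (Dk*P2k) * ((ku * eu) * kv) - iota \<phi> (Zk*P2k) * ((ku * eu) * kv) - (iota \<phi> (Dk*P2k) * (kv * (ku * eu)) - iota \<phi> (Zk*P2k) * ((kv * ev) * ku))) = 0"
    and h00: "(iota \<phi> (Dk*P2k) * ((ku * eu) * (kv * ev)) - iota \<phi> (Zk*P2k) * ((ku * eu) * (kv * ev)) - (iota \<phi> (Dk*P2k) * ((kv * ev) * (ku * eu)) - iota \<phi> (Zk*P2k) * ((kv * ev) * (ku * eu)) + iota \<phi> (2*Zk*Dk) * (kv * gv * ku + (kv * ev * (ku * eu) + kv * (ku * gu))))) = 0"
    and hm1p1: "(iota \<phi> (Dk*P2k) * (ku * (kv * gv)) - iota \<phi> (Zk*P2k) * (ku * (kv * gv)) - (iota \<phi> (Dk*P2k) * ((kv * gv) * ku) - iota \<phi> (Zk*P2k) * (kv * (ku * gu)) + iota \<phi> (2*Zk*Dk) * (kv * gv * ku + (kv * ev * (ku * eu) + kv * (ku * gu))))) = 0"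
  shows "kv * ku = ku * kv" and "(iota \<phi> (Dk) * (ev * ku) - ku * (iota \<phi> (Mk) * ev + iota \<phi> (Zk) * eu)) = 0"
    and "(iota \<phi> 2 * gu + eu * eu) = 0 \<Longrightarrow> (iota \<phi> 2 * gv + ev * ev) = 0 \<Longrightarrow> (iota \<phi> (2*Dk) * (eu * ev - ev * eu) - iota \<phi> (Zk) * ((eu - ev) * (eu - ev))) = 0"
proof -
  interpret cent "iota \<phi>" using calg by (rule cent_iota)
  define as where "as = [ku, kv, eu, ev, gu, gv]"
  have at: "ku = evp (iota \<phi>) as [([0],1)]" "kv = evp (iota \<phi>) as [([1],1)]"
     "eu = evp (iota \<phi>) as [([2],1)]" "ev = evp (iota \<phi>) as [([3],1)]"
     "gu = evp (iota \<phi>) as [([4],1)]" "gv = evp (iota \<phi>) as [([5],1)]"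
    by (subst evp_atom[symmetric]; simp add: as_def)+
  have "iota \<phi> Mk * (iota \<phi> P2k * (ku * kv - kv * ku)) - (iota \<phi> (Dk*P2k) * (ku * kv) - iota \<phi> (Zk*P2k) * (ku * kv) - (iota \<phi> (Dk*P2k) * (kv * ku) - iota \<phi> (Zk*P2k) * (kv * ku))) = 0"
    apply (simp only: at evp_cst[where as=as] reify_merge)
    apply (rule evp_zero)
    apply (simp only: pm_simps pneg_simps append.simps list.map prod.case swp.simps list.set ball_simps csum_simps fst_conv)
    apply (simp only: list.inject list.distinct numeral_eq_iff semiring_norm zero_neq_numeral numeral_neq_zero one_neq_zero zero_neq_one numeral_eq_one_iff one_eq_numeral_iff simp_thms if_True if_False add_0_left add_0_right)
    apply ((rule conjI | algebra)+)?
    done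
  then have "iota \<phi> Mk * (iota \<phi> P2k * (ku * kv - kv * ku)) = 0" using h11 by simp
  then have "ku * kv - kv * ku = 0" using cancel_Mk[OF calg] cancel_P2k[OF calg] by blast
  then show K: "kv * ku = ku * kv" by simp
  have Kas: "as ! 1 * as ! 0 = as ! 0 * as ! 1" using K by (simp add: as_def)
  have "iota \<phi> (P2k) * (- (kv * (iota \<phi> (Dk) * (ev * ku) - ku * (iota \<phi> (Mk) * ev + iota \<phi> (Zk) * eu)))) - (iota \<phi> (Dk*P2k) * (ku * (kv * ev)) - iota \<phi> (Zk*P2k) * (ku * (kv * ev)) - (iota \<phi> (Dk*P2k) * ((kv * ev) * ku) - iota \<phi> (Zk*P2k) * (kv * (ku * eu)))) = 0"
    apply (simp only: at evp_cst[where as=as] reify_merge)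
    apply (subst evp_swp[OF Kas])
    apply (rule evp_zero)
    apply (simp only: pm_simps pneg_simps append.simps list.map prod.case swp.simps list.set ball_simps csum_simps fst_conv)
    apply (simp only: list.inject list.distinct numeral_eq_iff semiring_norm zero_neq_numeral numeral_neq_zero one_neq_zero zero_neq_one numeral_eq_one_iff one_eq_numeral_iff simp_thms if_True if_False add_0_left add_0_right)
    apply ((rule conjI | algebra)+)?
    done
  then have "iota \<phi> (P2k) * (- (kv * (iota \<phi> (Dk) * (ev * ku) - ku * (iota \<phi> (Mk) * ev + iota \<phi> (Zk) * eu)))) = 0" using h10 by simp
  then have "kv * (iota \<phi> (Dk) * (ev * ku) - ku * (iota \<phi> (Mk) * ev + iota \<phi> (Zk) * eu)) = 0" using cancel_P2k[OF calg] by (metis neg_equal_0_iff_equal)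
  then show c1: "(iota \<phi> (Dk) * (ev * ku) - ku * (iota \<phi> (Mk) * ev + iota \<phi> (Zk) * eu)) = 0" by (rule ckv)
  have "(iota \<phi> (Dk*P2k) * ((ku * eu) * kv) - iota \<phi> (Zk*P2k) * ((ku * eu) * kv) - (iota \<phi> (Dk*P2k) * (kv * (ku * eu)) - iota \<phi> (Zk*P2k) * ((kv * ev) * ku))) - iota \<phi> (P2k) * (iota \<phi> (Mk) * (ku * eu * kv) - iota \<phi> (Dk) * (kv * ku * eu) + iota \<phi> (Zk) * (kv * ev * ku)) = 0"
    apply (simp only: at evp_cst[where as=as] reify_merge)
    apply (subst evp_swp[OF Kas])
    apply (rule evp_zero)
    apply (simp only: pm_simps pneg_simps append.simps list.map prod.case swp.simps list.set ball_simps csum_simps fst_conv)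
    apply (simp only: list.inject list.distinct numeral_eq_iff semiring_norm zero_neq_numeral numeral_neq_zero one_neq_zero zero_neq_one numeral_eq_one_iff one_eq_numeral_iff simp_thms if_True if_False add_0_left add_0_right)
    apply ((rule conjI | algebra)+)?
    done
  then have "iota \<phi> (P2k) * (iota \<phi> (Mk) * (ku * eu * kv) - iota \<phi> (Dk) * (kv * ku * eu) + iota \<phi> (Zk) * (kv * ev * ku)) = 0" using h01 by simp
  then have c01: "(iota \<phi> (Mk) * (ku * eu * kv) - iota \<phi> (Dk) * (kv * ku * eu) + iota \<phi> (Zk) * (kv * ev * ku)) = 0" using cancel_P2k[OF calg] by blast
  have "ku * (iota \<phi> (Mk) * (iota \<phi> (Dk) * (eu * kv) - kv * (iota \<phi> (Mpk) * eu - iota \<phi> (Zk) * ev))) - (iota \<phi> (Dk) * (iota \<phi> (Mk) * (ku * eu * kv) - iota \<phi> (Dk) * (kv * ku * eu) + iota \<phi> (Zk) * (kv * ev * ku)) - iota \<phi> (Zk) * (kv * (iota \<phi> (Dk) * (ev * ku) - ku * (iota \<phi> (Mk) * ev + iota \<phi> (Zk) * eu)))) = 0"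
    apply (simp only: at evp_cst[where as=as] reify_merge)
    apply (subst evp_swp[OF Kas])
    apply (rule evp_zero)
    apply (simp only: pm_simps pneg_simps append.simps list.map prod.case swp.simps list.set ball_simps csum_simps fst_conv)
    apply (simp only: list.inject list.distinct numeral_eq_iff semiring_norm zero_neq_numeral numeral_neq_zero one_neq_zero zero_neq_one numeral_eq_one_iff one_eq_numeral_iff simp_thms if_True if_False add_0_left add_0_right)
    apply ((rule conjI | algebra)+)?
    done
  then have "ku * (iota \<phi> (Mk) * (iota \<phi> (Dk) * (eu * kv) - kv * (iota \<phi> (Mpk) * eu - iota \<phi> (Zk) * ev))) = 0" using c01 c1 by simp
  then have c2: "(iota \<phi> (Dk) * (eu * kv) - kv * (iota \<phi> (Mpk) * eu - iota \<phi> (Zk) * ev)) = 0" using cancel_Mk[OF calg] cku by blast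
  assume hgu: "(iota \<phi> 2 * gu + eu * eu) = 0" and hgv: "(iota \<phi> 2 * gv + ev * ev) = 0"
  have "iota \<phi> (P2k*Mk*Mpk) * (ku * (kv * (iota \<phi> (2*Dk) * (eu * ev - ev * eu) - iota \<phi> (Zk) * ((eu - ev) * (eu - ev))))) - (- iota \<phi> (2*Dk*Zk) * (iota \<phi> (Dk*P2k) * (ku * (kv * gv)) - iota \<phi> (Zk*P2k) * (ku * (kv * gv)) - (iota \<phi> (Dk*P2k) * ((kv * gv) * ku) - iota \<phi> (Zk*P2k) * (kv * (ku * gu)) + iota \<phi> (2*Zk*Dk) * (kv * gv * ku + (kv * ev * (ku * eu) + kv * (ku * gu))))) + iota \<phi> (Dk*Pp2k) * (iota \<phi> (Dk*P2k) * ((ku * eu) * (kv * ev)) - iota \<phi> (Zk*P2k) * ((ku * eu) * (kv * ev)) - (iota \<phi> (Dk*P2k) * ((kv * ev) * (ku * eu)) - iota \<phi> (Zk*P2k) * ((kv * ev) * (ku * eu)) + iota \<phi> (2*Zk*Dk) * (kv * gv * ku + (kv * ev * (ku * eu) + kv * (ku * gu))))) + iota \<phi> (P2k) * (- iota \<phi> (Pp2k*Mk) * (ku * ((iota \<phi> (Dk) * (eu * kv) - kv * (iota \<phi> (Mpk) * eu - iota \<phi> (Zk) * ev)) * ev)) + iota \<phi> (Pp2k*Mk + 2*Zk*Dk) * (kv * ((iota \<phi> (Dk) * (ev * ku) - ku * (iota \<phi> (Mk) * ev + iota \<phi> (Zk) * eu)) * eu)) + iota \<phi> (Zk*Mk*Dk)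 * (ku * (kv * (iota \<phi> 2 * gv + ev * ev))) + iota \<phi> (Zk*Mpk*Dk) * (ku * (kv * (iota \<phi> 2 * gu + eu * eu))))) = 0"
    apply (simp only: at evp_cst[where as=as] reify_merge)
    apply (subst evp_swp[OF Kas])
    apply (rule evp_zero)
    apply (simp only: pm_simps pneg_simps append.simps list.map prod.case swp.simps list.set ball_simps csum_simps fst_conv)
    apply (simp only: list.inject list.distinct numeral_eq_iff semiring_norm zero_neq_numeral numeral_neq_zero one_neq_zero zero_neq_one numeral_eq_one_iff one_eq_numeral_iff simp_thms if_True if_False add_0_left add_0_right)
    apply ((rule conjI | algebra)+)?
    done
  then have "iota \<phi> (P2k*Mk*Mpk) * (ku * (kv * (iota \<phi> (2*Dk) * (eu * ev - ev * eu) - iota \<phi> (Zk) * ((eu - ev) * (eu - ev))))) = 0"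
    using hm1p1 h00 c1 c2 hgu hgv by simp
  then have "iota \<phi> (P2k) * (iota \<phi> (Mk) * (iota \<phi> (Mpk) * (ku * (kv * (iota \<phi> (2*Dk) * (eu * ev - ev * eu) - iota \<phi> (Zk) * ((eu - ev) * (eu - ev))))))) = 0"
    by (simp only: i_mult mult.assoc)
  then show "(iota \<phi> (2*Dk) * (eu * ev - ev * eu) - iota \<phi> (Zk) * ((eu - ev) * (eu - ev))) = 0" using cancel_Mk[OF calg] cancel_P2k[OF calg] cancel_Mpk[OF calg] cku ckv by blast
qed


lemma sig_uminus: "sig (- F) = - sig F"
  using sig_diff[of 0 F] sig_const[of 0] by simp
lemma sig_numeral: "sig (numeral n) = numeral n"
  by (simp add: numeral_fps_const sig_const)
lemma sig_Dk: "sig Dk = fps_X * qq"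
proof -
  have "sig Dk = qq - fps_X" by (simp add: Dk_def sig_diff sig_X sig_const)
  also have "\<dots> = fps_X * qq"
  proof (rule fps_ext)
    fix n show "(qq - fps_X) $ n = (fps_X * qq :: complex fps) $ n"
      by (cases n; cases "n - 1") (simp_all add: qq_def)
  qed
  finally show ?thesis .
qed
lemma sig_Zk: "sig Zk = fps_X * qq"
  by (simp add: Zk_def sig_mult sig_X sig_const)

lemma qq_cancel: fixes A :: "'a::ring_1 fps" assumes "qq * A = 0" shows "A = 0"
proof -
  have e: "qq = fps_X * Abs_fps (\<lambda>_. 1 :: 'a)"
    by (rule fps_ext) (simp add: qq_def)
  have "fps_X * (Abs_fps (\<lambda>_. 1 :: 'a) * A) = qq * A" by (simp only: e mult.assoc)
  then have "fps_X * (Abs_fps (\<lambda>_. 1 :: 'a) * A) = 0" using assms by simp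
  then have "Abs_fps (\<lambda>_. 1 :: 'a) * A = 0" by (rule fps_X_cancel)
  then show ?thesis by (rule const1_cancel[rotated]) simp
qed

lemma core_sig:
  fixes \<phi> :: "complex \<Rightarrow> 'b::ring_1" and ku kv eu ev gu gv :: "'b fps fps"
  assumes calg: "calg \<phi>"
    and cku: "\<And>A. sig ku * A = 0 \<Longrightarrow> A = 0" and ckv: "\<And>A. sig kv * A = 0 \<Longrightarrow> A = 0"
    and K: "kv * ku = ku * kv"
    and c1: "(iota \<phi> (Dk) * (ev * ku) - ku * (iota \<phi> (Mk) * ev + iota \<phi> (Zk) * eu)) = 0"
    and hm1p1: "(iota \<phi> (Dk*P2k) * (ku * (kv * gv)) - iota \<phi> (Zk*P2k) * (ku * (kv * gv)) - (iota \<phi> (Dk*P2k) * ((kv * gv) * ku) - iota \<phi> (Zk*P2k) * (kv * (ku * gu)) + iota \<phi> (2*Zk*Dk) * (kv * gv * ku + (kv * ev * (ku * eu) + kv * (ku * gu))))) = 0"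
    and hp1m1: "(iota \<phi> (Dk*P2k) * ((ku * gu) * kv) - iota \<phi> (Zk*P2k) * ((ku * gu) * kv) - (iota \<phi> (Dk*P2k) * (kv * (ku * gu)) - iota \<phi> (Zk*P2k) * ((kv * gv) * ku) + iota \<phi> (2*Zk*Dk) * (kv * gv * ku + (kv * ev * (ku * eu) + kv * (ku * gu))))) = 0"
  shows "sig (iota \<phi> 2 * gu + eu * eu) = 0"
proof -
  interpret cent "iota1 \<phi>" using calg by (rule cent_iota1)
  define as where "as = [sig ku, sig kv, sig eu, sig ev, sig gu, sig gv]"
  have at: "sig ku = evp (iota1 \<phi>) as [([0],1)]" "sig kv = evp (iota1 \<phi>) as [([1],1)]"
     "sig eu = evp (iota1 \<phi>) as [([2],1)]" "sig ev = evp (iota1 \<phi>) as [([3],1)]"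
     "sig gu = evp (iota1 \<phi>) as [([4],1)]" "sig gv = evp (iota1 \<phi>) as [([5],1)]"
    by (subst evp_atom[symmetric]; simp add: as_def)+
  have Kas: "as ! 1 * as ! 0 = as ! 0 * as ! 1" using arg_cong[OF K, of sig] by (simp add: as_def sig_mult)
  have "sig (iota \<phi> (4*Zk*Zk*Zk) * (ku * (kv * (iota \<phi> 2 * gu + eu * eu))) - (iota \<phi> (Zk) * ((iota \<phi> (Dk*P2k) * (ku * (kv * gv)) - iota \<phi> (Zk*P2k) * (ku * (kv * gv)) - (iota \<phi> (Dk*P2k) * ((kv * gv) * ku) - iota \<phi> (Zk*P2k) * (kv * (ku * gu)) + iota \<phi> (2*Zk*Dk) * (kv * gv * ku + (kv * ev * (ku * eu) + kv * (ku * gu))))) - iota \<phi> (3) * (iota \<phi> (Dk*P2k) * ((ku * gu) * kv) - iota \<phi> (Zk*P2k) * ((ku * gu) * kv) - (iota \<phi> (Dk*P2k) * (kv * (ku * gu)) - iota \<phi> (Zk*P2k) * ((kv * gv) * ku) + iota \<phi> (2*Zk*Dk) * (kv * gv * ku + (kv * ev * (ku * eu) + kv * (ku * gu)))))) - iota \<phi> (4*Zk*Zk) * (kv * ((iota \<phi> (Dk) * (ev * ku) - ku * (iota \<phi> (Mk) * ev + iota \<phi> (Zk) * eu)) * eu)))) = 0"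
    apply (simp only: sig_mult sig_add sig_diff sig_uminus sig_iota[OF calg] sig_numeral sig_Dk sig_Zk)
    apply (simp only: at evp_cst[where as=as] reify_merge)
    apply (subst evp_swp[OF Kas])
    apply (rule evp_zero)
    apply (simp only: pm_simps pneg_simps append.simps list.map prod.case swp.simps list.set ball_simps csum_simps fst_conv)
    apply (simp only: list.inject list.distinct numeral_eq_iff semiring_norm zero_neq_numeral numeral_neq_zero one_neq_zero zero_neq_one numeral_eq_one_iff one_eq_numeral_iff simp_thms if_True if_False add_0_left add_0_right)
    apply ((rule conjI | algebra)+)?
    done
  then have "sig (iota \<phi> (4*Zk*Zk*Zk) * (ku * (kv * (iota \<phi> 2 * gu + eu * eu)))) = 0"
    using c1 hm1p1 hp1m1 by (simp add: sig_const[of 0, simplified])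
  then have y4: "iota1 \<phi> 4 * (fps_X * (qq * (fps_X * (qq * (fps_X * (qq * (sig ku * (sig kv * sig (iota \<phi> 2 * gu + eu * eu))))))))) = 0"
    by (simp add: sig_mult sig_iota[OF calg] sig_numeral sig_Zk i_mult iota1_X[OF calg] iota1_qq[OF calg] mult.assoc)
  have q4: "iota1 \<phi> (fps_const (1/4)) * iota1 \<phi> 4 = 1"
    by (simp only: i_mult[symmetric] numeral_fps_const fps_const_mult) (simp add: i_one)
  have "iota1 \<phi> (fps_const (1/4)) * iota1 \<phi> 4 * (fps_X * (qq * (fps_X * (qq * (fps_X * (qq * (sig ku * (sig kv * sig (iota \<phi> 2 * gu + eu * eu))))))))) = 0"
    using y4 by (simp only: mult.assoc mult_zero_right)
  then have "fps_X * (qq * (fps_X * (qq * (fps_X * (qq * (sig ku * (sig kv * sig (iota \<phi> 2 * gu + eu * eu)))))))) = 0"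
    by (simp only: q4 mult_1_left)
  then show ?thesis using fps_X_cancel qq_cancel cku ckv by blast
qed


definition LR :: "(complex \<Rightarrow> 'b::ring_1) \<Rightarrow> 'b fps fps \<Rightarrow> 'b fps fps" where
  "LR \<phi> A = iota \<phi> Dk * (iota \<phi> Dk * A - iota \<phi> hc * (iota \<phi> Zk * A))"
definition LP :: "(complex \<Rightarrow> 'b::ring_1) \<Rightarrow> 'b fps fps \<Rightarrow> 'b fps fps" where
  "LP \<phi> A = iota \<phi> Zk * (iota \<phi> Dk * A - iota \<phi> hc * (iota \<phi> Zk * A))"
definition LQ :: "(complex \<Rightarrow> 'b::ring_1) \<Rightarrow> 'b fps fps \<Rightarrow> 'b fps fps" where
  "LQ \<phi> A = iota \<phi> Dk * (iota \<phi> Zk * A)"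

lemma two_half3: "2 * (d * (d' - hc * z)) = d * (2 * d' - z)"
proof -
  have "2 * (d * (d' - hc * z)) = d * (2 * d' - (2 * hc) * z)" by (simp add: algebra_simps)
  then show ?thesis by (simp only: hc2 mult_1_left)
qed

lemma scale_gen:
  assumes calg: "calg \<phi>"
  shows "iota \<phi> 2 * (iota \<phi> a * (iota \<phi> Dk * A - iota \<phi> hc * (iota \<phi> Zk * A))) = iota \<phi> (a * P2k) * A"
proof -
  interpret cent "iota \<phi>" using calg by (rule cent_iota)
  have "iota \<phi> Dk * A - iota \<phi> hc * (iota \<phi> Zk * A) = iota \<phi> (Dk - hc * Zk) * A"
    by (simp only: i_diff i_mult mult.assoc left_diff_distrib)
  then have "iota \<phi> 2 * (iota \<phi> a * (iota \<phi> Dk * A - iota \<phi> hc * (iota \<phi> Zk * A))) = iota \<phi> (2 * (a * (Dk - hc * Zk))) * A"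
    by (simp only: i_mult mult.assoc)
  also have "2 * (a * (Dk - hc * Zk)) = a * P2k" by (rule two_half3)
  finally show ?thesis .
qed

lemma scale_LR: "calg \<phi> \<Longrightarrow> iota \<phi> 2 * LR \<phi> A = iota \<phi> (Dk * P2k) * A"
  unfolding LR_def by (rule scale_gen)
lemma scale_LP: "calg \<phi> \<Longrightarrow> iota \<phi> 2 * LP \<phi> A = iota \<phi> (Zk * P2k) * A"
  unfolding LP_def by (rule scale_gen)
lemma scale_LQ: "calg \<phi> \<Longrightarrow> iota \<phi> 2 * LQ \<phi> A = iota \<phi> (2 * Zk * Dk) * A"
proof -
  assume calg: "calg \<phi>"
  interpret cent "iota \<phi>" using calg by (rule cent_iota)
  have "iota \<phi> 2 * LQ \<phi> A = iota \<phi> (2 * (Dk * Zk)) * A" by (simp only: LQ_def i_mult mult.assoc)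
  also have "2 * (Dk * Zk) = 2 * Zk * Dk" by (simp add: algebra_simps)
  finally show ?thesis .
qed

lemma inst_scale:
  assumes calg: "calg \<phi>" and h: "LR \<phi> X - LP \<phi> Y = LR \<phi> W - LP \<phi> V' + Q"
  shows "iota \<phi> (Dk*P2k) * X - iota \<phi> (Zk*P2k) * Y - (iota \<phi> (Dk*P2k) * W - iota \<phi> (Zk*P2k) * V' + iota \<phi> 2 * Q) = 0"
proof -
  have "iota \<phi> 2 * (LR \<phi> X - LP \<phi> Y - (LR \<phi> W - LP \<phi> V' + Q)) = 0" using h by simp
  then show ?thesis by (simp only: right_diff_distrib distrib_left scale_LR[OF calg] scale_LP[OF calg])
qed
lemma inst_scale0:
  assumes calg: "calg \<phi>" and h: "LR \<phi> X - LP \<phi> Y = LR \<phi> W - LP \<phi> V'"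
  shows "iota \<phi> (Dk*P2k) * X - iota \<phi> (Zk*P2k) * Y - (iota \<phi> (Dk*P2k) * W - iota \<phi> (Zk*P2k) * V') = 0"
proof -
  have "iota \<phi> 2 * (LR \<phi> X - LP \<phi> Y - (LR \<phi> W - LP \<phi> V')) = 0" using h by simp
  then show ?thesis by (simp only: right_diff_distrib distrib_left scale_LR[OF calg] scale_LP[OF calg])
qed

lemma sidx: "(\<Sum>a\<in>idx. f a) = f (-1) + (f 0 + (f 1 :: 'a::comm_monoid_add))"
  by (simp add: idx_def)

lemma iota_two: assumes "calg \<phi>" shows "iota \<phi> 2 = 1 + 1"
proof -
  interpret cent "iota \<phi>" using assms by (rule cent_iota)
  have "iota \<phi> 2 = iota \<phi> (1 + 1)" by (simp only: one_add_one)
  also have "\<dots> = 1 + 1" by (simp only: i_add i_one)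
  finally show ?thesis .
qed
lemma iota1_two: assumes "calg \<phi>" shows "iota1 \<phi> 2 = 1 + 1"
proof -
  interpret cent "iota1 \<phi>" using assms by (rule cent_iota1)
  have "iota1 \<phi> 2 = iota1 \<phi> (1 + 1)" by (simp only: one_add_one)
  also have "\<dots> = 1 + 1" by (simp only: i_add i_one)
  finally show ?thesis .
qed

lemma core_full:
  fixes \<phi> :: "complex \<Rightarrow> 'b::ring_1" and k e g :: "nat \<Rightarrow> 'b" and r :: "int \<Rightarrow> nat \<Rightarrow> 'b"
  assumes calg: "calg \<phi>" and k0: "k 0 = 1"
    and rm1: "r (-1) = k" and r0: "r 0 = cmul1 k e" and r1: "r 1 = cmul1 k g"
    and rel: "\<And>j l. j \<in> idx \<Longrightarrow> l \<in> idx \<Longrightarrow>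
      LR \<phi> (U (r j) * V (r l)) - LP \<phi> (U (r j) * V (r l))
      = LR \<phi> (V (r l) * U (r j)) - LP \<phi> (V (r j) * U (r l))
        + (if l = - j then LQ \<phi> (\<Sum>a\<in>idx. V (r (- a)) * U (r a)) else 0)"
  shows "iota \<phi> Dk * (U e * V e - V e * U e) = iota \<phi> hc * (iota \<phi> Zk * ((U e - V e) * (U e - V e)))"
proof -
  interpret cent "iota \<phi>" using calg by (rule cent_iota)
  define ku where "ku = U k"
  define kv where "kv = V k"
  define eu where "eu = U e"
  define ev where "ev = V e"
  define gu where "gu = U g"
  define gv where "gv = V g"
  have Ur: "U (r (-1)) = ku" "U (r 0) = ku * eu" "U (r 1) = ku * gu"
    by (simp_all add: rm1 r0 r1 U_mult ku_def eu_def gu_def)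
  have Vr: "V (r (-1)) = kv" "V (r 0) = kv * ev" "V (r 1) = kv * gv"
    by (simp_all add: rm1 r0 r1 V_mult kv_def ev_def gv_def)
  have cku: "\<And>A. ku * A = 0 \<Longrightarrow> A = 0"
    by (rule fps_const_cancel[of "Abs_fps k"]) (simp_all add: k0 ku_def U_def)
  have ckv: "\<And>A. kv * A = 0 \<Longrightarrow> A = 0"
    by (rule const1_cancel[of kv]) (simp_all add: k0 kv_def V_def)
  have cku1: "\<And>A. sig ku * A = 0 \<Longrightarrow> A = 0"
    by (rule const1_cancel[of "sig ku"]) (simp_all add: k0 ku_def sig_U)
  have ckv1: "\<And>A. sig kv * A = 0 \<Longrightarrow> A = 0"
    by (rule const1_cancel[of "sig kv"]) (simp_all add: k0 kv_def sig_nth0 V_def)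
  have h11raw: "LR \<phi> (U (r (-1)) * V (r (-1))) - LP \<phi> (U (r (-1)) * V (r (-1))) = LR \<phi> (V (r (-1)) * U (r (-1))) - LP \<phi> (V (r (-1)) * U (r (-1)))"
    using rel[of "-1" "-1"] by (simp add: idx_def)
  have h11: "(iota \<phi> (Dk*P2k) * (ku * kv) - iota \<phi> (Zk*P2k) * (ku * kv) - (iota \<phi> (Dk*P2k) * (kv * ku) - iota \<phi> (Zk*P2k) * (kv * ku))) = 0"
    using inst_scale0[OF calg h11raw] by (simp only: Ur Vr)
  have h10raw: "LR \<phi> (U (r (-1)) * V (r 0)) - LP \<phi> (U (r (-1)) * V (r 0)) = LR \<phi> (V (r 0) * U (r (-1))) - LP \<phi> (V (r (-1)) * U (r 0))"
    using rel[of "-1" 0] by (simp add: idx_def)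
  have h10: "(iota \<phi> (Dk*P2k) * (ku * (kv * ev)) - iota \<phi> (Zk*P2k) * (ku * (kv * ev)) - (iota \<phi> (Dk*P2k) * ((kv * ev) * ku) - iota \<phi> (Zk*P2k) * (kv * (ku * eu)))) = 0"
    using inst_scale0[OF calg h10raw] by (simp only: Ur Vr)
  have h01raw: "LR \<phi> (U (r 0) * V (r (-1))) - LP \<phi> (U (r 0) * V (r (-1))) = LR \<phi> (V (r (-1)) * U (r 0)) - LP \<phi> (V (r 0) * U (r (-1)))"
    using rel[of 0 "-1"] by (simp add: idx_def)
  have h01: "(iota \<phi> (Dk*P2k) * ((ku * eu) * kv) - iota \<phi> (Zk*P2k) * ((ku * eu) * kv) - (iota \<phi> (Dk*P2k) * (kv * (ku * eu)) - iota \<phi> (Zk*P2k) * ((kv * ev) * ku))) = 0"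
    using inst_scale0[OF calg h01raw] by (simp only: Ur Vr)
  have h00raw: "LR \<phi> (U (r 0) * V (r 0)) - LP \<phi> (U (r 0) * V (r 0)) = LR \<phi> (V (r 0) * U (r 0)) - LP \<phi> (V (r 0) * U (r 0)) + LQ \<phi> (\<Sum>a\<in>idx. V (r (- a)) * U (r a))"
    using rel[of 0 0] by (simp add: idx_def)
  have h00: "(iota \<phi> (Dk*P2k) * ((ku * eu) * (kv * ev)) - iota \<phi> (Zk*P2k) * ((ku * eu) * (kv * ev)) - (iota \<phi> (Dk*P2k) * ((kv * ev) * (ku * eu)) - iota \<phi> (Zk*P2k) * ((kv * ev) * (ku * eu)) + iota \<phi> (2*Zk*Dk) * (kv * gv * ku + (kv * ev * (ku * eu) + kv * (ku * gu))))) = 0"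
    using inst_scale[OF calg h00raw] by (simp only: scale_LQ[OF calg] sidx minus_minus minus_zero Ur Vr)
  have hm1p1raw: "LR \<phi> (U (r (-1)) * V (r 1)) - LP \<phi> (U (r (-1)) * V (r 1)) = LR \<phi> (V (r 1) * U (r (-1))) - LP \<phi> (V (r (-1)) * U (r 1)) + LQ \<phi> (\<Sum>a\<in>idx. V (r (- a)) * U (r a))"
    using rel[of "-1" 1] by (simp add: idx_def)
  have hm1p1: "(iota \<phi> (Dk*P2k) * (ku * (kv * gv)) - iota \<phi> (Zk*P2k) * (ku * (kv * gv)) - (iota \<phi> (Dk*P2k) * ((kv * gv) * ku) - iota \<phi> (Zk*P2k) * (kv * (ku * gu)) + iota \<phi> (2*Zk*Dk) * (kv * gv * ku + (kv * ev * (ku * eu) + kv * (ku * gu))))) = 0"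
    using inst_scale[OF calg hm1p1raw] by (simp only: scale_LQ[OF calg] sidx minus_minus minus_zero Ur Vr)
  have hp1m1raw: "LR \<phi> (U (r 1) * V (r (-1))) - LP \<phi> (U (r 1) * V (r (-1))) = LR \<phi> (V (r (-1)) * U (r 1)) - LP \<phi> (V (r 1) * U (r (-1))) + LQ \<phi> (\<Sum>a\<in>idx. V (r (- a)) * U (r a))"
    using rel[of 1 "-1"] by (simp add: idx_def)
  have hp1m1: "(iota \<phi> (Dk*P2k) * ((ku * gu) * kv) - iota \<phi> (Zk*P2k) * ((ku * gu) * kv) - (iota \<phi> (Dk*P2k) * (kv * (ku * gu)) - iota \<phi> (Zk*P2k) * ((kv * gv) * ku) + iota \<phi> (2*Zk*Dk) * (kv * gv * ku + (kv * ev * (ku * eu) + kv * (ku * gu))))) = 0"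
    using inst_scale[OF calg hp1m1raw] by (simp only: scale_LQ[OF calg] sidx minus_minus minus_zero Ur Vr)

  note R2 = core_R2[OF calg cku ckv h11 h10 h01 h00 hm1p1]
  have sg: "sig (iota \<phi> 2 * gu + eu * eu) = 0" by (rule core_sig[OF calg cku1 ckv1 R2(1) R2(2) hm1p1 hp1m1])
  have "(1 + 1) * Abs_fps g + Abs_fps e * Abs_fps e = 0"
    using sg by (simp add: sig_add sig_mult sig_iota[OF calg] sig_numeral iota1_two[OF calg] gu_def eu_def sig_U)
  then have gfun: "g + g + cmul1 e e = 0"
  proof -
    assume h: "(1 + 1) * Abs_fps g + Abs_fps e * Abs_fps e = 0"
    have "Abs_fps (g + g + cmul1 e e) = Abs_fps g + Abs_fps g + Abs_fps e * Abs_fps e"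
      by (rule fps_ext) (simp add: fps_mult_nth cmul1_def atLeast0AtMost)
    also have "\<dots> = (1 + 1) * Abs_fps g + Abs_fps e * Abs_fps e" by (simp only: distrib_right mult_1_left)
    finally have "Abs_fps (g + g + cmul1 e e) = (1 + 1) * Abs_fps g + Abs_fps e * Abs_fps e" .
    then have z: "Abs_fps (g + g + cmul1 e e) = 0" using h by simp
    show ?thesis
    proof
      fix n
      have "Abs_fps (g + g + cmul1 e e) $ n = 0" using z by simp
      then show "(g + g + cmul1 e e) n = 0 n" by simp
    qed
  qed
  have hgu: "(iota \<phi> 2 * gu + eu * eu) = 0"
  proof -
    have "(iota \<phi> 2 * gu + eu * eu) = U (g + g + cmul1 e e)"
      by (simp only: iota_two[OF calg] distrib_right mult_1_left U_add U_mult gu_def eu_def)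
    then show ?thesis by (simp add: gfun U_zero)
  qed
  have hgv: "(iota \<phi> 2 * gv + ev * ev) = 0"
  proof -
    have "(iota \<phi> 2 * gv + ev * ev) = V (g + g + cmul1 e e)"
      by (simp only: iota_two[OF calg] distrib_right mult_1_left V_add V_mult gv_def ev_def)
    then show ?thesis by (simp add: gfun V_zero)
  qed
  have T: "(iota \<phi> (2*Dk) * (eu * ev - ev * eu) - iota \<phi> (Zk) * ((eu - ev) * (eu - ev))) = 0" using R2(3) hgu hgv by blast
  have "iota \<phi> hc * (iota \<phi> (2*Dk) * (eu * ev - ev * eu) - iota \<phi> (Zk) * ((eu - ev) * (eu - ev))) = 0" using T by simp
  then have "iota \<phi> (hc * (2 * Dk)) * (eu * ev - ev * eu) - iota \<phi> (hc * Zk) * ((eu - ev) * (eu - ev)) = 0"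
    by (simp only: right_diff_distrib i_mult mult.assoc)
  moreover have "hc * (2 * Dk) = Dk" by (simp only: mult.assoc[symmetric] mult.commute[of hc 2] hc2 mult_1_left)
  ultimately show ?thesis by (simp add: i_mult mult.assoc eu_def ev_def)
qed


lemma iota_Dk: "calg \<phi> \<Longrightarrow> iota \<phi> Dk = yR - xR"
  by (simp add: Dk_def cent.i_diff[OF cent_iota] iota_Yc iota_Xc)
lemma iota_Zk: "calg \<phi> \<Longrightarrow> iota \<phi> Zk = xR * yR"
  by (simp add: Zk_def cent.i_mult[OF cent_iota] iota_Yc iota_Xc)

lemma supp_mul_umvh: "supp s A \<Longrightarrow> supp (s + 1) (mul_umvh \<phi> A)"
  unfolding mul_umvh_def
  by (intro supp_diff supp_mul_umv supp_scal2) (auto intro: supp_mono)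

lemma Psi1_mul_umvh:
  assumes calg: "calg \<phi>" and s: "supp 0 C"
  shows "Psi 1 (mul_umvh \<phi> C) = iota \<phi> Dk * Psi 0 C - iota \<phi> hc * (iota \<phi> Zk * Psi 0 C)"
proof -
  have s1: "supp 1 C" using s by (rule supp_mono) simp
  have "Psi 1 (mul_umvh \<phi> C) = Psi (0+1) (mul_umv C) - Psi (0+1) (scal2 \<phi> (1/2) C)"
    by (simp add: mul_umvh_def Psi_diff)
  also have "\<dots> = (yR - xR) * Psi 0 C - fps_const (fps_const (\<phi> (1/2))) * ((xR * yR) * Psi 0 C)"
    by (simp only: Psi_mul_umv[OF s] Psi_scal2 Psi_shift[OF s])
  finally show ?thesis by (simp add: iota_Dk[OF calg] iota_Zk[OF calg] iota_Cc[OF calg])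
qed

lemma Psi2_LR:
  assumes calg: "calg \<phi>" and s: "supp 0 C"
  shows "Psi 2 (mul_umv (mul_umvh \<phi> C)) = LR \<phi> (Psi 0 C)"
proof -
  have s1: "supp 1 (mul_umvh \<phi> C)" using supp_mul_umvh[OF s] by simp
  have "Psi 2 (mul_umv (mul_umvh \<phi> C)) = Psi (1+1) (mul_umv (mul_umvh \<phi> C))" by simp
  also have "\<dots> = (yR - xR) * Psi 1 (mul_umvh \<phi> C)" by (rule Psi_mul_umv[OF s1])
  finally show ?thesis by (simp add: LR_def Psi1_mul_umvh[OF calg s] iota_Dk[OF calg])
qed

lemma Psi2_LP:
  assumes calg: "calg \<phi>" and s: "supp 0 C"
  shows "Psi 2 (mul_umvh \<phi> C) = LP \<phi> (Psi 0 C)"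
proof -
  have s1: "supp 1 (mul_umvh \<phi> C)" using supp_mul_umvh[OF s] by simp
  have "Psi 2 (mul_umvh \<phi> C) = Psi (1+1) (mul_umvh \<phi> C)" by simp
  also have "\<dots> = (xR * yR) * Psi 1 (mul_umvh \<phi> C)" by (rule Psi_shift[OF s1])
  finally show ?thesis by (simp add: LP_def Psi1_mul_umvh[OF calg s] iota_Zk[OF calg])
qed

lemma Psi2_LQ:
  assumes calg: "calg \<phi>" and s: "supp 0 C"
  shows "Psi 2 (mul_umv C) = LQ \<phi> (Psi 0 C)"
proof -
  have s1: "supp 1 C" using s by (rule supp_mono) simp
  have "Psi 2 (mul_umv C) = Psi (1+1) (mul_umv C)" by simp
  also have "\<dots> = (yR - xR) * Psi 1 C" by (rule Psi_mul_umv[OF s1])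
  also have "Psi 1 C = Psi (0+1) C" by simp
  also have "\<dots> = (xR * yR) * Psi 0 C" by (rule Psi_shift[OF s])
  finally show ?thesis by (simp add: LQ_def iota_Dk[OF calg] iota_Zk[OF calg])
qed

lemma Psi0_uv: "Psi 0 (cmul2 (ser_u a) (ser_v b)) = U a * V b"
  by (simp add: Psi_cmul2 Psi_ser_u Psi_ser_v)
lemma Psi0_vu: "Psi 0 (cmul2 (ser_v a) (ser_u b)) = V a * U b"
  by (simp add: Psi_cmul2 Psi_ser_u Psi_ser_v)

lemma Psi_if: "Psi s (if c then A else 0) = (if c then Psi s A else 0)"
  by (simp add: Psi_zero)

lemma rtt_fps:
  fixes \<phi> :: "complex \<Rightarrow> 'b::ring_1"
  assumes calg: "calg \<phi>" and rtt: "rtt_rel \<phi> t"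
    and ijkl: "i \<in> idx" "j \<in> idx" "k \<in> idx" "l \<in> idx"
  shows "LR \<phi> (U (t i j) * V (t k l)) - LP \<phi> (U (t k j) * V (t i l))
      + (if k = - i then LQ \<phi> (\<Sum>a\<in>idx. U (t a j) * V (t (- a) l)) else 0)
    = LR \<phi> (V (t k l) * U (t i j)) - LP \<phi> (V (t k j) * U (t i l))
      + (if l = - j then LQ \<phi> (\<Sum>a\<in>idx. V (t k (- a)) * U (t i a)) else 0)"
proof -
  have e: "mul_umv (mul_umvh \<phi> (cmul2 (ser_u (t i j)) (ser_v (t k l))))
       - mul_umvh \<phi> (cmul2 (ser_u (t k j)) (ser_v (t i l)))
       + (if k = - i then mul_umv (\<Sum>a\<in>idx. cmul2 (ser_u (t a j)) (ser_v (t (- a) l))) else 0)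
     = mul_umv (mul_umvh \<phi> (cmul2 (ser_v (t k l)) (ser_u (t i j))))
       - mul_umvh \<phi> (cmul2 (ser_v (t k j)) (ser_u (t i l)))
       + (if l = - j then mul_umv (\<Sum>a\<in>idx. cmul2 (ser_v (t k (- a))) (ser_u (t i a))) else 0)"
    using rtt ijkl unfolding rtt_rel_def by blast
  have ss: "supp 0 (\<Sum>a\<in>idx. cmul2 (A a) (B a))" for A B :: "int \<Rightarrow> int \<Rightarrow> int \<Rightarrow> 'b"
    by (intro supp_sum supp_cmul2)
  have "Psi 2 (mul_umv (mul_umvh \<phi> (cmul2 (ser_u (t i j)) (ser_v (t k l))))
       - mul_umvh \<phi> (cmul2 (ser_u (t k j)) (ser_v (t i l)))
       + (if k = - i then mul_umv (\<Sum>a\<in>idx. cmul2 (ser_u (t a j)) (ser_v (t (- a) l))) else 0))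
     = Psi 2 (mul_umv (mul_umvh \<phi> (cmul2 (ser_v (t k l)) (ser_u (t i j))))
       - mul_umvh \<phi> (cmul2 (ser_v (t k j)) (ser_u (t i l)))
       + (if l = - j then mul_umv (\<Sum>a\<in>idx. cmul2 (ser_v (t k (- a))) (ser_u (t i a))) else 0))"
    using e by simp
  then show ?thesis
    by (simp only: Psi_add Psi_diff Psi_if Psi2_LR[OF calg supp_cmul2] Psi2_LP[OF calg supp_cmul2]
        Psi2_LQ[OF calg ss] Psi_sum Psi0_uv Psi0_vu)
qed


lemma cmul1_one_left: "cmul1 ser1_one b = (b :: nat \<Rightarrow> 'a::ring_1)"
proof
  fix n
  have "cmul1 ser1_one b n = (\<Sum>p\<in>{..n}. if p = 0 then b n else 0)"
    unfolding cmul1_def by (rule sum.cong) (auto simp: ser1_one_def)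
  then show "cmul1 ser1_one b n = b n" by simp
qed
lemma cmul1_one_right: "cmul1 a ser1_one = (a :: nat \<Rightarrow> 'a::ring_1)"
proof
  fix n
  have "cmul1 a ser1_one n = (\<Sum>p\<in>{..n}. if p = n then a n else 0)"
    unfolding cmul1_def by (rule sum.cong) (auto simp: ser1_one_def)
  then show "cmul1 a ser1_one n = a n" by simp
qed
lemma cmul1_zero_left: "cmul1 0 b = (0 :: nat \<Rightarrow> 'a::ring_1)"
  by (rule ext) (simp add: cmul1_def)
lemma cmul1_zero_right: "cmul1 a 0 = (0 :: nat \<Rightarrow> 'a::ring_1)"
  by (rule ext) (simp add: cmul1_def)

lemma gauss_row:
  assumes g: "gauss_decomp t f k e"
  shows "t (-1) (-1) = k (-1)" "t (-1) 0 = cmul1 (k (-1)) (e (-1) 0)" "t (-1) 1 = cmul1 (k (-1)) (e (-1) 1)"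
    "t 0 (-1) = cmul1 (f 0 (-1)) (k (-1))" "t 1 (-1) = cmul1 (f 1 (-1)) (k (-1))"
    "k (-1) 0 = 1"
proof -
  have tt: "\<And>i j. i \<in> idx \<Longrightarrow> j \<in> idx \<Longrightarrow> t i j = (\<Sum>a\<in>idx. cmul1 (cmul1 (Fmat f i a) (k a)) (Emat e a j))"
    using g unfolding gauss_decomp_def by blast
  show "k (-1) 0 = 1" using g unfolding gauss_decomp_def idx_def by blast
  show "t (-1) (-1) = k (-1)" "t (-1) 0 = cmul1 (k (-1)) (e (-1) 0)" "t (-1) 1 = cmul1 (k (-1)) (e (-1) 1)"
    "t 0 (-1) = cmul1 (f 0 (-1)) (k (-1))" "t 1 (-1) = cmul1 (f 1 (-1)) (k (-1))"
    by (simp_all add: tt idx_def sidx Fmat_def Emat_def cmul1_one_left cmul1_one_right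
        cmul1_zero_left cmul1_zero_right zero_fun_def[symmetric])
qed

lemma final_transfer:
  fixes \<phi> :: "complex \<Rightarrow> 'b::ring_1" and E :: "nat \<Rightarrow> 'b"
  assumes calg: "calg \<phi>"
    and h: "iota \<phi> Dk * (U E * V E - V E * U E) = fps_const (fps_const (\<phi> c)) * (iota \<phi> Zk * ((U E - V E) * (U E - V E)))"
  shows "mul_umv (cmul2 (ser_u E) (ser_v E) - cmul2 (ser_v E) (ser_u E))
           = scal2 \<phi> c (cmul2 (ser_u E - ser_v E) (ser_u E - ser_v E))"
proof (rule Psi_inj[of 1])
  have s0: "supp 0 (cmul2 (ser_u E) (ser_v E) - cmul2 (ser_v E) (ser_u E))"
    by (intro supp_diff supp_cmul2)
  show "supp 1 (mul_umv (cmul2 (ser_u E) (ser_v E) - cmul2 (ser_v E) (ser_u E)))"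
    using supp_mul_umv[OF s0] by simp
  show "supp 1 (scal2 \<phi> c (cmul2 (ser_u E - ser_v E) (ser_u E - ser_v E)))"
    by (intro supp_scal2 supp_mono[OF supp_cmul2]) simp
  have "Psi 1 (mul_umv (cmul2 (ser_u E) (ser_v E) - cmul2 (ser_v E) (ser_u E)))
     = Psi (0+1) (mul_umv (cmul2 (ser_u E) (ser_v E) - cmul2 (ser_v E) (ser_u E)))" by simp
  also have "\<dots> = (yR - xR) * Psi 0 (cmul2 (ser_u E) (ser_v E) - cmul2 (ser_v E) (ser_u E))"
    by (rule Psi_mul_umv[OF s0])
  also have "\<dots> = iota \<phi> Dk * (U E * V E - V E * U E)"
    by (simp add: iota_Dk[OF calg] Psi_diff Psi0_uv Psi0_vu)
  also have "\<dots> = fps_const (fps_const (\<phi> c)) * (iota \<phi> Zk * ((U E - V E) * (U E - V E)))" by (rule h)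
  also have "\<dots> = fps_const (fps_const (\<phi> c)) * ((xR * yR) * Psi 0 (cmul2 (ser_u E - ser_v E) (ser_u E - ser_v E)))"
    by (simp add: iota_Zk[OF calg] Psi_cmul2 Psi_diff Psi_ser_u Psi_ser_v)
  also have "(xR * yR) * Psi 0 (cmul2 (ser_u E - ser_v E) (ser_u E - ser_v E))
      = Psi (0+1) (cmul2 (ser_u E - ser_v E) (ser_u E - ser_v E))"
    by (rule Psi_shift[OF supp_cmul2, symmetric])
  also have "fps_const (fps_const (\<phi> c)) * Psi (0+1) (cmul2 (ser_u E - ser_v E) (ser_u E - ser_v E))
      = Psi 1 (scal2 \<phi> c (cmul2 (ser_u E - ser_v E) (ser_u E - ser_v E)))"
    by (simp add: Psi_scal2)
  finally show "Psi 1 (mul_umv (cmul2 (ser_u E) (ser_v E) - cmul2 (ser_v E) (ser_u E)))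
      = Psi 1 (scal2 \<phi> c (cmul2 (ser_u E - ser_v E) (ser_u E - ser_v E)))" .
qed

lemma e_part:
  fixes \<phi> :: "complex \<Rightarrow> 'a::ring_1"
    and t :: "int \<Rightarrow> int \<Rightarrow> nat \<Rightarrow> 'a"
    and f e :: "int \<Rightarrow> int \<Rightarrow> nat \<Rightarrow> 'a"
    and k :: "int \<Rightarrow> nat \<Rightarrow> 'a"
  assumes calg: "calg \<phi>" and y: "yangian_so3 \<phi> t" and g: "gauss_decomp t f k e"
  shows "mul_umv (cmul2 (ser_u (e (-1) 0)) (ser_v (e (-1) 0)) - cmul2 (ser_v (e (-1) 0)) (ser_u (e (-1) 0)))
           = scal2 \<phi> (1/2) (cmul2 (ser_u (e (-1) 0) - ser_v (e (-1) 0)) (ser_u (e (-1) 0) - ser_v (e (-1) 0)))"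
proof -
  have rtt: "rtt_rel \<phi> t" using y by (simp add: yangian_so3_def)
  note gr = gauss_row[OF g]
  have rel: "LR \<phi> (U (t (-1) j) * V (t (-1) l)) - LP \<phi> (U (t (-1) j) * V (t (-1) l))
      = LR \<phi> (V (t (-1) l) * U (t (-1) j)) - LP \<phi> (V (t (-1) j) * U (t (-1) l))
        + (if l = - j then LQ \<phi> (\<Sum>a\<in>idx. V (t (-1) (- a)) * U (t (-1) a)) else 0)"
    if "j \<in> idx" "l \<in> idx" for j l
    using rtt_fps[OF calg rtt _ that(1) _ that(2), of "-1" "-1"] by (simp add: idx_def)
  have "iota \<phi> Dk * (U (e (-1) 0) * V (e (-1) 0) - V (e (-1) 0) * U (e (-1) 0))
      = iota \<phi> hc * (iota \<phi> Zk * ((U (e (-1) 0) - V (e (-1) 0)) * (U (e (-1) 0) - V (e (-1) 0))))"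
    by (rule core_full[OF calg gr(6) gr(1) gr(2) gr(3) rel])
  then show ?thesis by (intro final_transfer[OF calg]) (simp add: iota_Cc[OF calg])
qed


typedef 'a opp = "UNIV :: 'a set" morphisms unop op by simp

instantiation opp :: (ring_1) ring_1
begin
definition zero_opp_def: "0 = op 0"
definition one_opp_def: "1 = op 1"
definition plus_opp_def: "a + b = op (unop a + unop b)"
definition minus_opp_def: "a - b = op (unop a - unop b)"
definition uminus_opp_def: "- a = op (- unop a)"
definition times_opp_def: "a * b = op (unop b * unop a)"
instance
proof
  fix a b c :: "'a opp"
  show "a * b * c = a * (b * c)" by (simp add: times_opp_def op_inverse mult.assoc)
  show "1 * a = a" by (simp add: times_opp_def one_opp_def op_inverse unop_inverse)
  show "a * 1 = a" by (simp add: times_opp_def one_opp_def op_inverse unop_inverse)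
  show "a + b + c = a + (b + c)" by (simp add: plus_opp_def op_inverse add.assoc)
  show "a + b = b + a" by (simp add: plus_opp_def add.commute)
  show "0 + a = a" by (simp add: plus_opp_def zero_opp_def op_inverse unop_inverse)
  show "- a + a = 0" by (simp add: plus_opp_def zero_opp_def uminus_opp_def op_inverse)
  show "a - b = a + - b" by (simp add: plus_opp_def minus_opp_def uminus_opp_def op_inverse)
  show "(a + b) * c = a * c + b * c" by (simp add: plus_opp_def times_opp_def op_inverse distrib_left)
  show "a * (b + c) = a * b + a * c" by (simp add: plus_opp_def times_opp_def op_inverse distrib_right)
  show "(0::'a opp) \<noteq> 1" by (simp add: zero_opp_def one_opp_def op_inject)
qed
end

lemma op_add: "op (x + y) = op x + op y" by (simp add: plus_opp_def op_inverse)
lemma op_diff: "op (x - y) = op x - op y" by (simp add: minus_opp_def op_inverse)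
lemma op_mult: "op (x * y) = op y * op x" by (simp add: times_opp_def op_inverse)
lemma op_zero: "op 0 = 0" by (simp add: zero_opp_def)
lemma op_one: "op 1 = 1" by (simp add: one_opp_def)
lemma op_sum: "op (sum f S) = (\<Sum>i\<in>S. op (f i))"
  by (induction S rule: infinite_finite_induct) (simp_all add: op_zero op_add)
lemma op_inj: "op x = op y \<Longrightarrow> x = y" by (simp add: op_inject)

lemma calg_op: assumes "calg \<phi>" shows "calg (op \<circ> \<phi>)"
  unfolding calg_def comp_def
proof (intro conjI allI)
  show "op (\<phi> 1) = 1" using assms by (simp add: calg_simps op_one)
  fix x y show "op (\<phi> (x + y)) = op (\<phi> x) + op (\<phi> y)" using assms by (simp add: calg_simps op_add)
next
  fix x y :: complex
  have "\<phi> (x * y) = \<phi> (y * x)" by (simp add: mult.commute)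
  then show "op (\<phi> (x * y)) = op (\<phi> x) * op (\<phi> y)" using assms by (simp add: calg_simps op_mult)
next
  fix c a
  show "op (\<phi> c) * a = a * op (\<phi> c)"
    using calg_comm[OF assms, of c "unop a"] by (simp add: times_opp_def op_inverse unop_inverse)
qed

lemma cmul1_op: "op \<circ> cmul1 a b = cmul1 (op \<circ> b) (op \<circ> a)"
proof
  fix n
  have "(op \<circ> cmul1 a b) n = (\<Sum>p=0..n. op (b (n - p)) * op (a p))"
    by (simp add: cmul1_def op_sum op_mult atLeast0AtMost)
  also have "\<dots> = (\<Sum>p=0..n. op (b (n - (n + 0 - p))) * op (a (n + 0 - p)))"
    by (rule sum.atLeastAtMost_rev)
  also have "\<dots> = (\<Sum>p=0..n. op (b p) * op (a (n - p)))"
    by (rule sum.cong) auto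
  also have "\<dots> = cmul1 (op \<circ> b) (op \<circ> a) n" by (simp add: cmul1_def atLeast0AtMost)
  finally show "(op \<circ> cmul1 a b) n = cmul1 (op \<circ> b) (op \<circ> a) n" .
qed

definition rho :: "'a::ring_1 fps fps \<Rightarrow> 'a opp fps fps" where
  "rho F = Abs_fps (\<lambda>n. Abs_fps (\<lambda>m. op (F $ n $ m)))"

lemma rho_nth: "rho F $ n $ m = op (F $ n $ m)" by (simp add: rho_def)
lemma rho_add: "rho (F + G) = rho F + rho G" by (rule fps_ext, rule fps_ext) (simp add: rho_nth op_add)
lemma rho_diff: "rho (F - G) = rho F - rho G" by (rule fps_ext, rule fps_ext) (simp add: rho_nth op_diff)
lemma rho_zero: "rho 0 = 0" by (rule fps_ext, rule fps_ext) (simp add: rho_nth op_zero)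
lemma rho_sum: "rho (sum f S) = (\<Sum>i\<in>S. rho (f i))"
  by (induction S rule: infinite_finite_induct) (simp_all add: rho_zero rho_add)
lemma rho_inj: "rho F = rho G \<Longrightarrow> F = G"
proof (rule fps_ext, rule fps_ext)
  fix n m assume "rho F = rho G"
  then have "rho F $ n $ m = rho G $ n $ m" by simp
  then show "F $ n $ m = G $ n $ m" by (simp add: rho_nth op_inj)
qed
lemma rho_U: "rho (U a) = U (op \<circ> a)" by (rule fps_ext, rule fps_ext) (simp add: rho_nth U_nth op_zero)
lemma rho_V: "rho (V a) = V (op \<circ> a)" by (rule fps_ext, rule fps_ext) (simp add: rho_nth V_nth op_zero)
lemma rho_iota: "rho (iota \<phi> c) = iota (op \<circ> \<phi>) c" by (rule fps_ext, rule fps_ext) (simp add: rho_nth iota_nth)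

lemma rho_mult: "rho (F * G) = rho G * rho F"
proof (rule fps_ext, rule fps_ext)
  fix n m
  have "rho (F * G) $ n $ m = (\<Sum>i=0..n. \<Sum>j=0..m. op (G $ (n - i) $ (m - j)) * op (F $ i $ j))"
    by (simp add: rho_nth fps_mult_nth fps_sum_nth op_sum op_mult)
  also have "\<dots> = (\<Sum>i=0..n. \<Sum>j=0..m. op (G $ (n - (n + 0 - i)) $ (m - (m + 0 - j))) * op (F $ (n + 0 - i) $ (m + 0 - j)))"
    by (subst sum.atLeastAtMost_rev, rule sum.cong[OF refl], subst sum.atLeastAtMost_rev, rule refl)
  also have "\<dots> = (\<Sum>i=0..n. \<Sum>j=0..m. op (G $ i $ j) * op (F $ (n - i) $ (m - j)))"
    by (intro sum.cong refl) auto
  also have "\<dots> = (rho G * rho F) $ n $ m"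
    by (simp add: rho_nth fps_mult_nth fps_sum_nth)
  finally show "rho (F * G) $ n $ m = (rho G * rho F) $ n $ m" .
qed

lemma rho_cmul:
  assumes "calg \<phi>" shows "rho (iota \<phi> c * A) = iota (op \<circ> \<phi>) c * rho A"
  using iota_central[OF calg_op[OF assms]] by (simp add: rho_mult rho_iota)

lemma rho_LR: "calg \<phi> \<Longrightarrow> rho (LR \<phi> X) = LR (op \<circ> \<phi>) (rho X)"
  by (simp add: LR_def rho_cmul rho_diff)
lemma rho_LP: "calg \<phi> \<Longrightarrow> rho (LP \<phi> X) = LP (op \<circ> \<phi>) (rho X)"
  by (simp add: LP_def rho_cmul rho_diff)
lemma rho_LQ: "calg \<phi> \<Longrightarrow> rho (LQ \<phi> X) = LQ (op \<circ> \<phi>) (rho X)"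
  by (simp add: LQ_def rho_cmul)


lemma rho_if: "rho (if c then A else 0) = (if c then rho A else 0)"
  by (simp add: rho_zero)

lemma f_part:
  fixes \<phi> :: "complex \<Rightarrow> 'a::ring_1"
    and t :: "int \<Rightarrow> int \<Rightarrow> nat \<Rightarrow> 'a"
    and f e :: "int \<Rightarrow> int \<Rightarrow> nat \<Rightarrow> 'a"
    and k :: "int \<Rightarrow> nat \<Rightarrow> 'a"
  assumes calg: "calg \<phi>" and y: "yangian_so3 \<phi> t" and g: "gauss_decomp t f k e"
  shows "mul_umv (cmul2 (ser_u (f 0 (-1))) (ser_v (f 0 (-1))) - cmul2 (ser_v (f 0 (-1))) (ser_u (f 0 (-1))))
           = scal2 \<phi> (-1/2) (cmul2 (ser_u (f 0 (-1)) - ser_v (f 0 (-1))) (ser_u (f 0 (-1)) - ser_v (f 0 (-1))))"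
proof -
  have rtt: "rtt_rel \<phi> t" using y by (simp add: yangian_so3_def)
  note gr = gauss_row[OF g]
  have calg': "calg (op \<circ> \<phi>)" by (rule calg_op[OF calg])
  define r' where "r' j = op \<circ> t j (-1)" for j
  have r'm1: "r' (-1) = op \<circ> k (-1)" by (simp add: r'_def gr(1))
  have r'0: "r' 0 = cmul1 (op \<circ> k (-1)) (op \<circ> f 0 (-1))" by (simp add: r'_def gr(4) cmul1_op)
  have r'1: "r' 1 = cmul1 (op \<circ> k (-1)) (op \<circ> f 1 (-1))" by (simp add: r'_def gr(5) cmul1_op)
  have k'0: "(op \<circ> k (-1)) 0 = 1" by (simp add: gr(6) op_one)
  have rel: "LR (op \<circ> \<phi>) (U (r' j) * V (r' l)) - LP (op \<circ> \<phi>) (U (r' j) * V (r' l))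
      = LR (op \<circ> \<phi>) (V (r' l) * U (r' j)) - LP (op \<circ> \<phi>) (V (r' j) * U (r' l))
        + (if l = - j then LQ (op \<circ> \<phi>) (\<Sum>a\<in>idx. V (r' (- a)) * U (r' a)) else 0)"
    if jl: "j \<in> idx" "l \<in> idx" for j l
  proof -
    have m1: "(-1::int) \<in> idx" by (simp add: idx_def)
    have h: "LR \<phi> (U (t j (-1)) * V (t l (-1))) - LP \<phi> (U (t l (-1)) * V (t j (-1)))
      + (if l = - j then LQ \<phi> (\<Sum>a\<in>idx. U (t a (-1)) * V (t (- a) (-1))) else 0)
    = LR \<phi> (V (t l (-1)) * U (t j (-1))) - LP \<phi> (V (t l (-1)) * U (t j (-1)))
      + (if (-1::int) = - (-1) then LQ \<phi> (\<Sum>a\<in>idx. V (t l (- a)) * U (t j a)) else 0)"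
      by (rule rtt_fps[OF calg rtt jl(1) m1 jl(2) m1])
    have "rho (LR \<phi> (U (t j (-1)) * V (t l (-1))) - LP \<phi> (U (t l (-1)) * V (t j (-1)))
      + (if l = - j then LQ \<phi> (\<Sum>a\<in>idx. U (t a (-1)) * V (t (- a) (-1))) else 0))
    = rho (LR \<phi> (V (t l (-1)) * U (t j (-1))) - LP \<phi> (V (t l (-1)) * U (t j (-1))))"
      using h by simp
    then have "LR (op \<circ> \<phi>) (V (r' l) * U (r' j)) - LP (op \<circ> \<phi>) (V (r' j) * U (r' l))
      + (if l = - j then LQ (op \<circ> \<phi>) (\<Sum>a\<in>idx. V (r' (- a)) * U (r' a)) else 0)
      = LR (op \<circ> \<phi>) (U (r' j) * V (r' l)) - LP (op \<circ> \<phi>) (U (r' j) * V (r' l))"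
      by (simp only: rho_add rho_diff rho_if rho_LR[OF calg] rho_LP[OF calg] rho_LQ[OF calg]
          rho_sum rho_mult rho_U rho_V r'_def)
    then show ?thesis by simp
  qed
  have core: "iota (op \<circ> \<phi>) Dk * (U (op \<circ> f 0 (-1)) * V (op \<circ> f 0 (-1)) - V (op \<circ> f 0 (-1)) * U (op \<circ> f 0 (-1)))
      = iota (op \<circ> \<phi>) hc * (iota (op \<circ> \<phi>) Zk * ((U (op \<circ> f 0 (-1)) - V (op \<circ> f 0 (-1))) * (U (op \<circ> f 0 (-1)) - V (op \<circ> f 0 (-1)))))"
    by (rule core_full[OF calg' k'0 r'm1 r'0 r'1 rel])
  have "rho (iota \<phi> Dk * (V (f 0 (-1)) * U (f 0 (-1)) - U (f 0 (-1)) * V (f 0 (-1))))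
      = rho (iota \<phi> hc * (iota \<phi> Zk * ((U (f 0 (-1)) - V (f 0 (-1))) * (U (f 0 (-1)) - V (f 0 (-1))))))"
    using core by (simp only: rho_cmul[OF calg], simp only: rho_diff rho_mult rho_U rho_V)
  then have e1: "iota \<phi> Dk * (V (f 0 (-1)) * U (f 0 (-1)) - U (f 0 (-1)) * V (f 0 (-1)))
      = iota \<phi> hc * (iota \<phi> Zk * ((U (f 0 (-1)) - V (f 0 (-1))) * (U (f 0 (-1)) - V (f 0 (-1)))))"
    by (rule rho_inj)
  have hneg: "fps_const (fps_const (\<phi> (-1/2))) = - iota \<phi> hc"
  proof -
    have "(-1/2 :: complex) = - (1/2)" by simp
    then show ?thesis by (simp add: iota_Cc[OF calg] calg_simps[OF calg])
  qed
  have "iota \<phi> Dk * (U (f 0 (-1)) * V (f 0 (-1)) - V (f 0 (-1)) * U (f 0 (-1)))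
      = - (iota \<phi> Dk * (V (f 0 (-1)) * U (f 0 (-1)) - U (f 0 (-1)) * V (f 0 (-1))))"
    by (simp add: algebra_simps)
  also have "\<dots> = fps_const (fps_const (\<phi> (-1/2))) * (iota \<phi> Zk * ((U (f 0 (-1)) - V (f 0 (-1))) * (U (f 0 (-1)) - V (f 0 (-1)))))"
    by (simp only: e1 hneg minus_mult_left)
  finally show ?thesis by (rule final_transfer[OF calg])
qed

theorem proposition3p7:
  fixes \<phi> :: "complex \<Rightarrow> 'a::ring_1"
    and t :: "int \<Rightarrow> int \<Rightarrow> nat \<Rightarrow> 'a"
    and f e :: "int \<Rightarrow> int \<Rightarrow> nat \<Rightarrow> 'a"
    and k :: "int \<Rightarrow> nat \<Rightarrow> 'a"
  assumes "calg \<phi>"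
    and "yangian_so3 \<phi> t"
    and "gauss_decomp t f k e"
  shows "(mul_umv (cmul2 (ser_u (e (-1) 0)) (ser_v (e (-1) 0)) - cmul2 (ser_v (e (-1) 0)) (ser_u (e (-1) 0)))
           = scal2 \<phi> (1/2) (cmul2 (ser_u (e (-1) 0) - ser_v (e (-1) 0)) (ser_u (e (-1) 0) - ser_v (e (-1) 0))))
         \<and> (mul_umv (cmul2 (ser_u (f 0 (-1))) (ser_v (f 0 (-1))) - cmul2 (ser_v (f 0 (-1))) (ser_u (f 0 (-1))))
           = scal2 \<phi> (-1/2) (cmul2 (ser_u (f 0 (-1)) - ser_v (f 0 (-1))) (ser_u (f 0 (-1)) - ser_v (f 0 (-1)))))"
  using e_part[OF assms] f_part[OF assms] by blast


end
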